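(* The Wachspress quadrics $(I_{W_d})_2$ are those elements of $S_2$ which are diagonally supported and vanish on $\mathcal{C}$. The quadrics $Q_k=\Lambda_k\cdot \tau$ for $k=1,\dots,d$ span $(I_{W_d})_2$.
   Context: Let $P_d$ be a convex polygon with $d\ge 4$ vertices $v_1,\dots,v_d$ (indices mod $d$) over a field $\mathbb{K}$ with no three edge lines concurrent. Set ${\bf v}_i=(v_i,1)$, ${\bf n}_i={\bf v}_i\times{\bf v}_{i+1}$, $\alpha_j=|{\bf v}_{j-1}\,{\bf v}_j\,{\bf v}_{j+1}|$, $\ell_j=|{\bf v}_j\,{\bf v}_{j+1}\,{\bf p}|$, $b_i=\alpha_i\prod_{j\ne i-1,i}\ell_j$; $W_d\subseteq\mathbb{P}^{d-1}$ is the closure of the image of $p\mapsto(b_1,\dots,b_d)$ with ideal $I_{W_d}\subseteq S=\mathbb{K}[x_1,\ldots,x_d]$. Let $\tau=\sum_i x_i{\bf v}_i\in S_1^3$, $\mathcal{C}=\mathbb{V}(\tau_1,\tau_2,\tau_3)$ the center of the projection $\tau$, and $\Lambda_k=\frac{x_{k+1}}{\alpha_{k+1}}{\bf n}_{k+1}-\frac{x_k}{\alpha_k}{\bf n}_{k-1}$. A quadric is diagonally supported if it is a linear combination of monomials $x_ix_j$ with $j\notin\{i-1,i,i+1\}$. *)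

theory Defs
  imports Main
begin

text \<open>Points of the plane are pairs; homogeneous vectors in K^3 are triples.
  Polygon vertices are indexed 0..d-1 (cyclically, mod d).\<close>

type_synonym 'a vec3 = "'a \<times> 'a \<times> 'a"

definition hom :: "'a::field \<times> 'a \<Rightarrow> 'a vec3" where
  "hom p = (fst p, snd p, 1)"

fun comp3 :: "'a vec3 \<Rightarrow> nat \<Rightarrow> 'a" where
  "comp3 (a1, a2, a3) m = (if m = 0 then a1 else if m = 1 then a2 else a3)"

fun cross3 :: "'a::comm_ring vec3 \<Rightarrow> 'a vec3 \<Rightarrow> 'a vec3" where
  "cross3 (a1, a2, a3) (b1, b2, b3) =
     (a2 * b3 - a3 * b2, a3 * b1 - a1 * b3, a1 * b2 - a2 * b1)"

fun dot3 :: "'a::comm_ring vec3 \<Rightarrow> 'a vec3 \<Rightarrow> 'a" where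
  "dot3 (a1, a2, a3) (b1, b2, b3) = a1 * b1 + a2 * b2 + a3 * b3"

definition det3 :: "'a::comm_ring vec3 \<Rightarrow> 'a vec3 \<Rightarrow> 'a vec3 \<Rightarrow> 'a" where
  "det3 a b c = dot3 a (cross3 b c)"

definition vv :: "nat \<Rightarrow> (nat \<Rightarrow> 'a::field \<times> 'a) \<Rightarrow> nat \<Rightarrow> 'a vec3" where
  "vv d v i = hom (v (i mod d))"

definition prev :: "nat \<Rightarrow> nat \<Rightarrow> nat" where
  "prev d i = (i + d - 1) mod d"

definition nvec :: "nat \<Rightarrow> (nat \<Rightarrow> 'a::field \<times> 'a) \<Rightarrow> nat \<Rightarrow> 'a vec3" where
  "nvec d v i = cross3 (vv d v i) (vv d v (i + 1))"

definition alpha :: "nat \<Rightarrow> (nat \<Rightarrow> 'a::field \<times> 'a) \<Rightarrow> nat \<Rightarrow> 'a" where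
  "alpha d v j = det3 (vv d v (prev d j)) (vv d v j) (vv d v (j + 1))"

definition ell :: "nat \<Rightarrow> (nat \<Rightarrow> 'a::field \<times> 'a) \<Rightarrow> nat \<Rightarrow> 'a \<times> 'a \<Rightarrow> 'a" where
  "ell d v j p = det3 (vv d v j) (vv d v (j + 1)) (hom p)"

definition bcoord :: "nat \<Rightarrow> (nat \<Rightarrow> 'a::field \<times> 'a) \<Rightarrow> nat \<Rightarrow> 'a \<times> 'a \<Rightarrow> 'a" where
  "bcoord d v i p = alpha d v i * (\<Prod>j \<in> {0..<d} - {prev d i, i mod d}. ell d v j p)"

text \<open>Convex polygon (strictly convex, either orientation): for every edge
  v_i v_{i+1}, all other vertices lie strictly on the same side, with a
  common orientation sign s.\<close>
definition convex_polygon :: "nat \<Rightarrow> (nat \<Rightarrow> 'a::linordered_field \<times> 'a) \<Rightarrow> bool" where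
  "convex_polygon d v \<longleftrightarrow> (\<exists>s::'a. (s = 1 \<or> s = -1) \<and>
     (\<forall>i<d. \<forall>j<d. j \<noteq> i \<and> j \<noteq> (i + 1) mod d \<longrightarrow>
        s * det3 (vv d v i) (vv d v (i + 1)) (vv d v j) > 0))"

text \<open>No three (distinct) edge lines are concurrent (projectively).\<close>
definition no_three_concurrent :: "nat \<Rightarrow> (nat \<Rightarrow> 'a::field \<times> 'a) \<Rightarrow> bool" where
  "no_three_concurrent d v \<longleftrightarrow> (\<forall>i<d. \<forall>j<d. \<forall>k<d.
     i \<noteq> j \<and> j \<noteq> k \<and> i \<noteq> k \<longrightarrow> det3 (nvec d v i) (nvec d v j) (nvec d v k) \<noteq> 0)"

text \<open>Quadrics in S_2 = K[x_0..x_{d-1}]_2: coefficient c i j of the monomial x_i x_j,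
  stored for i \<le> j < d only (zero elsewhere).\<close>
definition S2 :: "nat \<Rightarrow> (nat \<Rightarrow> nat \<Rightarrow> 'a::field) set" where
  "S2 d = {c. \<forall>i j. c i j \<noteq> 0 \<longrightarrow> i \<le> j \<and> j < d}"

definition qeval :: "nat \<Rightarrow> (nat \<Rightarrow> nat \<Rightarrow> 'a::field) \<Rightarrow> (nat \<Rightarrow> 'a) \<Rightarrow> 'a" where
  "qeval d c x = (\<Sum>i<d. \<Sum>j<d. c i j * x i * x j)"

definition linmul :: "nat \<Rightarrow> (nat \<Rightarrow> 'a::field) \<Rightarrow> (nat \<Rightarrow> 'a) \<Rightarrow> nat \<Rightarrow> nat \<Rightarrow> 'a" where
  "linmul d a b i j = (if j < d \<and> i < j then a i * b j + a j * b i
                       else if j < d \<and> i = j then a i * b i else 0)"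

text \<open>Degree-2 part of the ideal of W_d: quadrics vanishing on the image of p \<mapsto> b(p).\<close>
definition IW2 :: "nat \<Rightarrow> (nat \<Rightarrow> 'a::field \<times> 'a) \<Rightarrow> (nat \<Rightarrow> nat \<Rightarrow> 'a) set" where
  "IW2 d v = {c \<in> S2 d. \<forall>p. qeval d c (\<lambda>i. bcoord d v i p) = 0}"

definition tau :: "nat \<Rightarrow> (nat \<Rightarrow> 'a::field \<times> 'a) \<Rightarrow> nat \<Rightarrow> nat \<Rightarrow> 'a" where
  "tau d v m i = (if i < d then comp3 (vv d v i) m else 0)"

definition center :: "nat \<Rightarrow> (nat \<Rightarrow> 'a::field \<times> 'a) \<Rightarrow> (nat \<Rightarrow> 'a) set" where
  "center d v = {x. \<forall>m<3. (\<Sum>i<d. tau d v m i * x i) = 0}"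

definition vanishes_on_center :: "nat \<Rightarrow> (nat \<Rightarrow> 'a::field \<times> 'a) \<Rightarrow> (nat \<Rightarrow> nat \<Rightarrow> 'a) \<Rightarrow> bool" where
  "vanishes_on_center d v c \<longleftrightarrow> (\<forall>x \<in> center d v. qeval d c x = 0)"

definition diag_supported :: "nat \<Rightarrow> (nat \<Rightarrow> nat \<Rightarrow> 'a::field) \<Rightarrow> bool" where
  "diag_supported d c \<longleftrightarrow> (\<forall>i<d. \<forall>j<d.
     (j = prev d i \<or> j = i \<or> j = (i + 1) mod d) \<longrightarrow> c i j = 0)"

definition Lam :: "nat \<Rightarrow> (nat \<Rightarrow> 'a::field \<times> 'a) \<Rightarrow> nat \<Rightarrow> nat \<Rightarrow> nat \<Rightarrow> 'a" where
  "Lam d v k m i =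
     (if i = (k + 1) mod d then comp3 (nvec d v (k + 1)) m / alpha d v (k + 1) else 0)
   - (if i = k mod d then comp3 (nvec d v (prev d k)) m / alpha d v k else 0)"

definition Qk :: "nat \<Rightarrow> (nat \<Rightarrow> 'a::field \<times> 'a) \<Rightarrow> nat \<Rightarrow> nat \<Rightarrow> nat \<Rightarrow> 'a" where
  "Qk d v k = (\<lambda>i j. \<Sum>m<3. linmul d (Lam d v k m) (tau d v m) i j)"

end

theory Submission
  imports Defs "HOL-Computational_Algebra.Polynomial"
begin


section \<open>Generic vector algebra\<close>

definition vadd :: "'a::comm_ring vec3 \<Rightarrow> 'a vec3 \<Rightarrow> 'a vec3" where
  "vadd x y = (fst x + fst y, fst (snd x) + fst (snd y), snd (snd x) + snd (snd y))"
definition vsc :: "'a::comm_ring \<Rightarrow> 'a vec3 \<Rightarrow> 'a vec3" where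
  "vsc t x = (t * fst x, t * fst (snd x), t * snd (snd x))"

lemma det3_cyc: "det3 a b c = det3 b c (a::'a::comm_ring vec3)"
  by (cases a; cases b; cases c) (simp add: det3_def algebra_simps)
lemma det3_rep1: "det3 a a (c::'a::comm_ring vec3) = 0"
  by (cases a; cases c) (simp add: det3_def algebra_simps)
lemma det3_rep2: "det3 a b (b::'a::comm_ring vec3) = 0"
  by (cases a; cases b) (simp add: det3_def algebra_simps)
lemma det3_rep3: "det3 a b (a::'a::comm_ring vec3) = 0"
  by (cases a; cases b) (simp add: det3_def algebra_simps)
lemma dot_cross: "dot3 (cross3 a b) c = det3 a b (c::'a::comm_ring vec3)"
  by (cases a; cases b; cases c) (simp add: det3_def algebra_simps)
lemma det3_add3: "det3 a b (vadd x y) = det3 a b x + det3 a b (y::'a::comm_ring vec3)"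
  by (cases a; cases b; cases x; cases y) (simp add: det3_def vadd_def algebra_simps)
lemma det3_sc3: "det3 a b (vsc t x) = t * det3 a b (x::'a::comm_ring vec3)"
  by (cases a; cases b; cases x) (simp add: det3_def vsc_def algebra_simps)
lemma cross_cross: "cross3 (cross3 a b) w = vadd (vsc (dot3 a w) b) (vsc (- dot3 b w) a)"
  for a b w :: "'a::comm_ring vec3"
  by (cases a; cases b; cases w) (simp add: vadd_def vsc_def algebra_simps)
lemma cross_cross2: "cross3 (cross3 a b) (cross3 b c) = vsc (det3 a b c) b"
  for a b c :: "'a::comm_ring vec3"
  by (cases a; cases b; cases c) (simp add: vsc_def det3_def algebra_simps)
lemma comp3_0: "comp3 x 0 = fst x" and comp3_1: "comp3 x 1 = fst (snd x)"
  and comp3_2: "comp3 x 2 = snd (snd x)"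
  by (cases x; simp)+

lemma sum3: "(\<Sum>m<3. f m) = f 0 + f 1 + (f (2::nat) :: 'a::comm_monoid_add)"
  by (simp add: eval_nat_numeral lessThan_Suc add.commute add.left_commute)

lemma sum_comp3_dot: "(\<Sum>m<3. comp3 x m * comp3 y m) = dot3 x (y::'a::comm_ring vec3)"
  by (cases x; cases y) (simp add: sum3)


section \<open>Quadric evaluation\<close>

lemma qeval_cong: "(\<And>j. j < d \<Longrightarrow> x j = y j) \<Longrightarrow> qeval d c x = qeval d c y"
  by (simp add: qeval_def)

lemma qeval_scale: "qeval d c (\<lambda>j. t * x j) = t * t * qeval d c x"
  by (simp add: qeval_def sum_distrib_left algebra_simps)

lemma qeval_sum_c: "qeval d (\<lambda>i j. \<Sum>k\<in>K. f k i j) x = (\<Sum>k\<in>K. qeval d (f k) x)"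
  by (simp add: qeval_def sum_distrib_right sum.swap[of _ K])

lemma qeval_lin_c: "qeval d (\<lambda>i j. a * c i j + b * e i j) x = a * qeval d c x + b * qeval d e x"
  by (simp add: qeval_def sum_distrib_left sum.distrib algebra_simps)

lemma qeval_diff_c: "qeval d (\<lambda>i j. c i j - e i j) x = qeval d c x - qeval d e x"
  by (simp add: qeval_def sum_subtractf algebra_simps)

definition bil :: "nat \<Rightarrow> (nat \<Rightarrow> nat \<Rightarrow> 'a::field) \<Rightarrow> (nat \<Rightarrow> 'a) \<Rightarrow> (nat \<Rightarrow> 'a) \<Rightarrow> 'a" where
  "bil d c x y = (\<Sum>i<d. \<Sum>j<d. c i j * (x i * y j + y i * x j))"

lemma qeval_add_x: "qeval d c (\<lambda>j. x j + y j) = qeval d c x + qeval d c y + bil d c x y"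
  by (simp add: qeval_def bil_def sum.distrib[symmetric] algebra_simps)

lemma qeval_supp:
  assumes "A \<subseteq> {..<d}" "\<And>j. j < d \<Longrightarrow> j \<notin> A \<Longrightarrow> x j = 0"
  shows "qeval d c x = (\<Sum>i\<in>A. \<Sum>j\<in>A. c i j * x i * x j)"
proof -
  have fA: "finite A" using assms(1) finite_subset by blast
  have "qeval d c x = (\<Sum>i\<in>A. \<Sum>j<d. c i j * x i * x j)"
    unfolding qeval_def
    by (rule sum.mono_neutral_right) (use assms in auto)
  also have "\<dots> = (\<Sum>i\<in>A. \<Sum>j\<in>A. c i j * x i * x j)"
    by (rule sum.cong[OF refl], rule sum.mono_neutral_right) (use assms fA in auto)
  finally show ?thesis .
qed

lemma bil_supp:
  assumes "A \<subseteq> {..<d}" "B \<subseteq> {..<d}" "\<And>j. j < d \<Longrightarrow> j \<notin> A \<Longrightarrow> x j = 0"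
    "\<And>j. j < d \<Longrightarrow> j \<notin> B \<Longrightarrow> y j = 0"
  shows "bil d c x y = (\<Sum>i\<in>A. \<Sum>j\<in>B. (c i j + c j i) * x i * y j)"
proof -
  have fA: "finite A" "finite B" using assms(1,2) finite_subset by blast+
  have 1: "(\<Sum>i<d. \<Sum>j<d. c i j * x i * y j) = (\<Sum>i\<in>A. \<Sum>j\<in>B. c i j * x i * y j)"
  proof -
    have "(\<Sum>i<d. \<Sum>j<d. c i j * x i * y j) = (\<Sum>i\<in>A. \<Sum>j<d. c i j * x i * y j)"
      by (rule sum.mono_neutral_right) (use assms in auto)
    also have "\<dots> = (\<Sum>i\<in>A. \<Sum>j\<in>B. c i j * x i * y j)"
      by (rule sum.cong[OF refl], rule sum.mono_neutral_right) (use assms fA in auto)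
    finally show ?thesis .
  qed
  have 2: "(\<Sum>i<d. \<Sum>j<d. c i j * y i * x j) = (\<Sum>i\<in>B. \<Sum>j\<in>A. c i j * y i * x j)"
  proof -
    have "(\<Sum>i<d. \<Sum>j<d. c i j * y i * x j) = (\<Sum>i\<in>B. \<Sum>j<d. c i j * y i * x j)"
      by (rule sum.mono_neutral_right) (use assms in auto)
    also have "\<dots> = (\<Sum>i\<in>B. \<Sum>j\<in>A. c i j * y i * x j)"
      by (rule sum.cong[OF refl], rule sum.mono_neutral_right) (use assms fA in auto)
    finally show ?thesis .
  qed
  have 3: "(\<Sum>i\<in>B. \<Sum>j\<in>A. c i j * y i * x j) = (\<Sum>j\<in>A. \<Sum>i\<in>B. c i j * y i * x j)"
    by (rule sum.swap)
  have "bil d c x y = (\<Sum>i<d. \<Sum>j<d. c i j * x i * y j) + (\<Sum>i<d. \<Sum>j<d. c i j * y i * x j)"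
    by (simp add: bil_def sum.distrib[symmetric] algebra_simps)
  also have "\<dots> = (\<Sum>i\<in>A. \<Sum>j\<in>B. c i j * x i * y j) + (\<Sum>j\<in>A. \<Sum>i\<in>B. c i j * y i * x j)"
    unfolding 1 2 3 ..
  also have "\<dots> = (\<Sum>i\<in>A. \<Sum>j\<in>B. c i j * x i * y j + c j i * y j * x i)"
    by (simp add: sum.distrib)
  also have "\<dots> = (\<Sum>i\<in>A. \<Sum>j\<in>B. (c i j + c j i) * x i * y j)"
    by (intro sum.cong refl) (simp add: algebra_simps)
  finally show ?thesis .
qed

lemma qeval_linmul:
  "qeval d (linmul d a b) x = (\<Sum>i<d. a i * x i) * (\<Sum>j<d. b j * x j)"
proof -
  define f where "f i j = a i * b j * x i * x j" for i j
  have e: "linmul d a b i j * x i * x j = (if i < j then f i j + f j i else if i = j then f i j else 0)"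
    if "i < d" "j < d" for i j
    using that by (auto simp: linmul_def f_def algebra_simps)
  have "qeval d (linmul d a b) x = (\<Sum>i<d. \<Sum>j<d. (if i < j then f i j else 0) + (if i < j then f j i else 0) + (if i = j then f i j else 0))"
    unfolding qeval_def by (intro sum.cong refl) (auto simp: e)
  also have "\<dots> = (\<Sum>i<d. \<Sum>j<d. (if i < j then f i j else 0)) + (\<Sum>i<d. \<Sum>j<d. (if i < j then f j i else 0)) + (\<Sum>i<d. \<Sum>j<d. (if i = j then f i j else 0))"
    by (simp add: sum.distrib)
  also have "(\<Sum>i<d. \<Sum>j<d. (if i < j then f j i else 0)) = (\<Sum>i<d. \<Sum>j<d. (if j < i then f i j else 0))"
    by (rule sum.swap)
  also have "(\<Sum>i<d. \<Sum>j<d. (if i < j then f i j else 0)) + (\<Sum>i<d. \<Sum>j<d. (if j < i then f i j else 0)) + (\<Sum>i<d. \<Sum>j<d. (if i = j then f i j else 0))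
     = (\<Sum>i<d. \<Sum>j<d. f i j)"
  proof -
    have "(\<Sum>i<d. \<Sum>j<d. (if i < j then f i j else 0)) + (\<Sum>i<d. \<Sum>j<d. (if j < i then f i j else 0)) + (\<Sum>i<d. \<Sum>j<d. (if i = j then f i j else 0))
      = (\<Sum>i<d. \<Sum>j<d. (if i < j then f i j else 0) + (if j < i then f i j else 0) + (if i = j then f i j else 0))"
      by (simp add: sum.distrib)
    also have "\<dots> = (\<Sum>i<d. \<Sum>j<d. f i j)"
      by (intro sum.cong refl) auto
    finally show ?thesis .
  qed
  also have "\<dots> = (\<Sum>i<d. a i * x i) * (\<Sum>j<d. b j * x j)"
    by (simp add: f_def sum_product algebra_simps)
  finally show ?thesis .
qed



locale wp =
  fixes d :: nat and v :: "nat \<Rightarrow> 'a::linordered_field \<times> 'a"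
  assumes d4: "4 \<le> d" and cvx: "convex_polygon d v" and ntc: "no_three_concurrent d v"
begin

abbreviation V where "V \<equiv> vv d v"
definition L where "L a b = det3 (V a) (V (a+1)) (V b)"
definition lh where "lh m P = det3 (V m) (V (m+1)) P"
abbreviation sc where "sc i \<equiv> Suc i mod d"
abbreviation pv where "pv i \<equiv> prev d i"

lemma dpos: "0 < d" using d4 by simp

lemma V_mod: "V (i mod d) = V i" by (simp add: vv_def)
lemma V_cong: "i mod d = j mod d \<Longrightarrow> V i = V j" by (simp add: vv_def)
lemma V_Suc_mod: "V (Suc (i mod d)) = V (Suc i)"
  by (rule V_cong) (simp add: mod_Suc_eq)
lemma lh_mod: "lh (m mod d) P = lh m P" by (simp add: lh_def V_mod V_Suc_mod)
lemma L_mod1: "L (a mod d) b = L a b" by (simp add: L_def V_mod V_Suc_mod)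
lemma L_mod2: "L a (b mod d) = L a b" by (simp add: L_def V_mod)
lemma nvec_mod: "nvec d v (m mod d) = nvec d v m" by (simp add: nvec_def V_mod V_Suc_mod)
lemma prev_mod: "prev d (j mod d) = prev d j"
  by (simp add: prev_def) (metis add_diff_assoc dpos less_eq_Suc_le mod_add_left_eq)
lemma alpha_mod: "alpha d v (j mod d) = alpha d v j"
  by (simp add: alpha_def prev_mod V_mod V_Suc_mod)

lemma prev_eq: "i < d \<Longrightarrow> prev d i = (if i = 0 then d - 1 else i - 1)"
proof (cases "i = 0")
  case True then show ?thesis using dpos by (simp add: prev_def)
next
  case False
  assume "i < d"
  then have e: "i + d - 1 = (i - 1) + d" using False by simp
  have "(i - 1 + d) mod d = i - 1" using \<open>i<d\<close> by simp
  then show ?thesis using False e by (simp add: prev_def)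
qed
lemma sc_eq: "i < d \<Longrightarrow> sc i = (if i = d - 1 then 0 else i + 1)"
proof -
  assume a: "i < d"
  show ?thesis
  proof (cases "i = d - 1")
    case True then have "Suc i = d" using a by simp
    then show ?thesis using True by simp
  next
    case False then have "Suc i < d" using a by simp
    then show ?thesis using False by simp
  qed
qed

lemma pv_lt: "pv i < d" using dpos by (simp add: prev_def)
lemma sc_lt: "sc i < d" using dpos by simp
lemma pv_ne: "i < d \<Longrightarrow> pv i \<noteq> i" using d4 by (cases "i = 0") (simp_all add: prev_eq)
lemma sc_ne: "i < d \<Longrightarrow> sc i \<noteq> i"
  using d4 sc_eq[of i] by (cases "i = d - 1") simp_all
lemma sc_val: "i < d \<Longrightarrow> i \<noteq> d - 1 \<Longrightarrow> sc i = i + 1"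
  by (metis sc_eq)
lemma sc_last: "sc (d - 1) = 0"
  using dpos by simp
lemma pv_val: "0 < i \<Longrightarrow> i < d \<Longrightarrow> pv i = i - 1"
  by (simp add: prev_eq)
lemma pv_0: "pv 0 = d - 1"
  using dpos by (simp add: prev_eq)
lemma sc_pv: "i < d \<Longrightarrow> sc (pv i) = i"
proof -
  assume a: "i < d"
  show ?thesis
  proof (cases "i = 0")
    case True then show ?thesis using sc_last pv_0 by simp
  next
    case False then have 1: "pv i = i - 1" using a pv_val by simp
    have "i - 1 \<noteq> d - 1" "i - 1 < d" using a False by arith+
    then have "sc (i - 1) = i - 1 + 1" by (rule sc_val[rotated])
    then show ?thesis using 1 False by simp
  qed
qed
lemma pv_sc: "i < d \<Longrightarrow> pv (sc i) = i"
proof -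
  assume a: "i < d"
  show ?thesis
  proof (cases "i = d - 1")
    case True then show ?thesis using sc_last pv_0 by simp
  next
    case False then have 1: "sc i = i + 1" using a sc_val by simp
    have "0 < i + 1" "i + 1 < d" using a False by arith+
    then have "pv (i + 1) = i + 1 - 1" by (rule pv_val)
    then show ?thesis using 1 by simp
  qed
qed
lemma sc_ne_pv: "i < d \<Longrightarrow> sc i \<noteq> pv i"
proof -
  assume a: "i < d"
  consider "i = 0" | "i = d - 1" | "0 < i \<and> i < d - 1" using a by arith
  then show ?thesis
  proof cases
    case 1
    have "sc 0 = 1" using d4 sc_val[of 0] by simp
    then show ?thesis using 1 pv_0 d4 by simp
  next
    case 2
    have "pv (d - 1) = d - 2" using d4 pv_val[of "d-1"] by simp
    then show ?thesis using 2 sc_last d4 by simp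
  next
    case 3 then show ?thesis using sc_val[of i] pv_val[of i] a by simp
  qed
qed
lemma scsc_ne: "i < d \<Longrightarrow> sc (sc i) \<noteq> i"
  by (metis pv_sc sc_lt sc_ne_pv)

lemma sc_inj: "i < d \<Longrightarrow> j < d \<Longrightarrow> sc i = sc j \<Longrightarrow> i = j"
  by (metis pv_sc)
lemma pv_inj: "i < d \<Longrightarrow> j < d \<Longrightarrow> pv i = pv j \<Longrightarrow> i = j"
  by (metis sc_pv)

lemma alpha_L: "alpha d v j = L j (pv j)"
  by (simp add: alpha_def L_def det3_cyc[of "V (pv j)"])

lemma L_self1: "L i i = 0" by (simp add: L_def det3_rep3)
lemma L_self2: "L i (i+1) = 0" by (simp add: L_def det3_rep2)
lemma L_zero_of: "j mod d = i mod d \<or> j mod d = (i + 1) mod d \<Longrightarrow> L i j = 0"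
  by (metis L_mod2 L_self1 L_self2)

definition sg where "sg = (SOME s::'a. (s = 1 \<or> s = -1) \<and>
     (\<forall>i<d. \<forall>j<d. j \<noteq> i \<and> j \<noteq> (i + 1) mod d \<longrightarrow> s * L i j > 0))"

lemma sg_prop0: "(sg = 1 \<or> sg = -1) \<and> (\<forall>i<d. \<forall>j<d. j \<noteq> i \<and> j \<noteq> (i + 1) mod d \<longrightarrow> sg * L i j > 0)"
proof -
  from cvx obtain s::'a where "(s = 1 \<or> s = -1) \<and>
     (\<forall>i<d. \<forall>j<d. j \<noteq> i \<and> j \<noteq> (i + 1) mod d \<longrightarrow> s * L i j > 0)"
    unfolding convex_polygon_def L_def by blast
  then show ?thesis unfolding sg_def by (rule someI)
qed

lemma sg_prop: "(sg = 1 \<or> sg = -1) \<and> (\<forall>i<d. \<forall>j<d. j \<noteq> i \<and> j \<noteq> sc i \<longrightarrow> sg * L i j > 0)"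
  using sg_prop0 by simp
lemma L_pos: "i < d \<Longrightarrow> j < d \<Longrightarrow> j \<noteq> i \<Longrightarrow> j \<noteq> sc i \<Longrightarrow> sg * L i j > 0"
  using sg_prop by blast
lemma L_nz: "i < d \<Longrightarrow> j < d \<Longrightarrow> j \<noteq> i \<Longrightarrow> j \<noteq> sc i \<Longrightarrow> L i j \<noteq> 0"
proof -
  assume "i < d" "j < d" "j \<noteq> i" "j \<noteq> sc i"
  then have "sg * L i j > 0" by (rule L_pos)
  then show ?thesis by auto
qed
lemma L_nonneg: "i < d \<Longrightarrow> j < d \<Longrightarrow> sg * L i j \<ge> 0"
proof -
  assume a: "i < d" "j < d"
  show ?thesis
  proof (cases "j = i \<or> j = sc i")
    case True
    then have "L i j = 0" using a by (intro L_zero_of) auto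
    then show ?thesis by simp
  next
    case False then have "sg * L i j > 0" using L_pos[OF a] by blast
    then show ?thesis by simp
  qed
qed
lemma L_zero_iff: "i < d \<Longrightarrow> j < d \<Longrightarrow> L i j = 0 \<longleftrightarrow> (j = i \<or> j = sc i)"
proof -
  assume a: "i < d" "j < d"
  show ?thesis
  proof
    assume "L i j = 0" then show "j = i \<or> j = sc i" using L_nz[OF a] by blast
  next
    assume "j = i \<or> j = sc i"
    then have "j mod d = i mod d \<or> j mod d = Suc i mod d" using a by auto
    then show "L i j = 0" using L_zero_of by simp
  qed
qed

lemma alpha_nz: "alpha d v j \<noteq> 0"
proof -
  let ?j = "j mod d"
  have j: "?j < d" using dpos by simp
  have "alpha d v j = alpha d v ?j" by (simp add: alpha_mod)
  also have "\<dots> = L ?j (pv ?j)" by (rule alpha_L)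
  also have "\<dots> \<noteq> 0"
    by (rule L_nz[OF j pv_lt pv_ne[OF j] sc_ne_pv[OF j, symmetric]])
  finally show ?thesis .
qed

lemma ntc': "i < d \<Longrightarrow> j < d \<Longrightarrow> k < d \<Longrightarrow> i \<noteq> j \<Longrightarrow> j \<noteq> k \<Longrightarrow> i \<noteq> k \<Longrightarrow>
   det3 (nvec d v i) (nvec d v j) (nvec d v k) \<noteq> 0"
  using ntc unfolding no_three_concurrent_def by blast

lemma ell_lh: "ell d v m p = lh m (hom p)" by (simp add: ell_def lh_def)
lemma lh_dot: "lh m P = dot3 (nvec d v m) P" by (simp add: lh_def nvec_def dot_cross)
lemma L_lh: "L m j = lh m (V j)" by (simp add: L_def lh_def)

end


lemma comp3_Suc0: "comp3 x (Suc 0) = fst (snd x)"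
  by (cases x) simp
lemma comp3_vadd: "comp3 (vadd x y) m = comp3 x m + comp3 y m"
  by (cases x; cases y) (simp add: vadd_def)
lemma comp3_vsc: "comp3 (vsc t x) m = t * comp3 x m"
  by (cases x) (simp add: vsc_def)
lemma cross_vsc1: "cross3 (vsc t x) y = vsc t (cross3 x (y::'a::comm_ring vec3))"
  by (cases x; cases y) (simp add: vsc_def algebra_simps)
lemma vsc_vsc: "vsc s (vsc t x) = vsc (s * t) (x::'a::comm_ring vec3)"
  by (cases x) (simp add: vsc_def algebra_simps)
lemma vsc_vadd: "vsc s (vadd x y) = vadd (vsc s x) (vsc s (y::'a::comm_ring vec3))"
  by (cases x; cases y) (simp add: vsc_def vadd_def algebra_simps)
lemma dot3_vadd1: "dot3 (vadd x y) w = dot3 x w + dot3 y (w::'a::comm_ring vec3)"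
  by (cases x; cases y; cases w) (simp add: vadd_def algebra_simps)
lemma dot3_vsc1: "dot3 (vsc t x) w = t * dot3 x (w::'a::comm_ring vec3)"
  by (cases x; cases w) (simp add: vsc_def algebra_simps)
lemma dot3_vsc2: "dot3 w (vsc t x) = t * dot3 w (x::'a::comm_ring vec3)"
  by (cases x; cases w) (simp add: vsc_def algebra_simps)

context wp begin

definition PP where "PP j p = (\<Prod>m\<in>{0..<d} - {j}. ell d v m p)"

lemma V_sc_pv: "j < d \<Longrightarrow> V (Suc (pv j)) = V j"
  using sc_pv V_cong by (metis mod_mod_trivial)

lemma nvec_pv: "j < d \<Longrightarrow> nvec d v (pv j) = cross3 (V (pv j)) (V j)"
  by (simp add: nvec_def V_sc_pv)

lemma alpha_cross: "j < d \<Longrightarrow> vsc (alpha d v j) (V j) = cross3 (nvec d v (pv j)) (nvec d v j)"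
proof -
  assume j: "j < d"
  show ?thesis by (simp add: nvec_def V_sc_pv[OF j] cross_cross2 alpha_def)
qed

lemma bc_split: "j < d \<Longrightarrow> bcoord d v j p = alpha d v j * (\<Prod>m\<in>{0..<d} - {pv j, j}. ell d v m p)"
  by (simp add: bcoord_def)

lemma PP_split1: "j < d \<Longrightarrow> PP j p = ell d v (pv j) p * (\<Prod>m\<in>{0..<d} - {pv j, j}. ell d v m p)"
proof -
  assume j: "j < d"
  have "pv j \<in> {0..<d} - {j}" using pv_lt pv_ne[OF j] by simp
  then have "PP j p = ell d v (pv j) p * (\<Prod>m\<in>{0..<d} - {j} - {pv j}. ell d v m p)"
    unfolding PP_def using prod.remove[of "{0..<d} - {j}" "pv j"] by simp
  also have "{0..<d} - {j} - {pv j} = {0..<d} - {pv j, j}" by auto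
  finally show ?thesis .
qed

lemma PP_split2: "j < d \<Longrightarrow> PP (pv j) p = ell d v j p * (\<Prod>m\<in>{0..<d} - {pv j, j}. ell d v m p)"
proof -
  assume j: "j < d"
  have "j \<in> {0..<d} - {pv j}" using j pv_ne[OF j] by simp
  then have "PP (pv j) p = ell d v j p * (\<Prod>m\<in>{0..<d} - {pv j} - {j}. ell d v m p)"
    unfolding PP_def using prod.remove[of "{0..<d} - {pv j}" j] by simp
  also have "{0..<d} - {pv j} - {j} = {0..<d} - {pv j, j}" by auto
  finally show ?thesis .
qed

lemma dot_nvec_hom: "dot3 (nvec d v m) (hom p) = ell d v m p"
  by (simp add: lh_dot[symmetric] ell_lh)

lemma bc_cross: "j < d \<Longrightarrow>
  vsc (bcoord d v j p) (cross3 (V j) (hom p)) =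
  vadd (vsc (PP j p) (nvec d v j)) (vsc (- PP (pv j) p) (nvec d v (pv j)))"
proof -
  assume j: "j < d"
  define G where "G = (\<Prod>m\<in>{0..<d} - {pv j, j}. ell d v m p)"
  have "vsc (bcoord d v j p) (cross3 (V j) (hom p)) = vsc G (cross3 (vsc (alpha d v j) (V j)) (hom p))"
    by (simp add: bc_split[OF j] G_def cross_vsc1 vsc_vsc mult.commute)
  also have "\<dots> = vsc G (vadd (vsc (ell d v (pv j) p) (nvec d v j)) (vsc (- ell d v j p) (nvec d v (pv j))))"
    by (simp add: alpha_cross[OF j] cross_cross dot_nvec_hom)
  also have "\<dots> = vadd (vsc (PP j p) (nvec d v j)) (vsc (- PP (pv j) p) (nvec d v (pv j)))"
    by (simp add: vsc_vadd vsc_vsc PP_split1[OF j] PP_split2[OF j] G_def mult.commute)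
  finally show ?thesis .
qed

lemma pv_bij: "bij_betw pv {..<d} {..<d}"
proof -
  have "inj_on pv {..<d}" by (auto intro: inj_onI pv_inj)
  moreover have "pv ` {..<d} = {..<d}"
  proof
    show "pv ` {..<d} \<subseteq> {..<d}" using pv_lt by auto
    show "{..<d} \<subseteq> pv ` {..<d}"
    proof
      fix i assume "i \<in> {..<d}"
      then have "i = pv (sc i)" "sc i \<in> {..<d}" using pv_sc sc_lt by auto
      then show "i \<in> pv ` {..<d}" by blast
    qed
  qed
  ultimately show ?thesis by (simp add: bij_betw_def)
qed

lemma sum_pv: "(\<Sum>j<d. f (pv j)) = (\<Sum>j<d. (f j :: 'a))"
  using sum.reindex_bij_betw[OF pv_bij, of f] .

lemma wach_cross_comp: "(\<Sum>j<d. bcoord d v j p * comp3 (cross3 (V j) (hom p)) m) = 0"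
proof -
  have "(\<Sum>j<d. bcoord d v j p * comp3 (cross3 (V j) (hom p)) m)
      = (\<Sum>j<d. PP j p * comp3 (nvec d v j) m - PP (pv j) p * comp3 (nvec d v (pv j)) m)"
  proof (intro sum.cong refl)
    fix j assume "j \<in> {..<d}"
    then have "comp3 (vsc (bcoord d v j p) (cross3 (V j) (hom p))) m = comp3 (vadd (vsc (PP j p) (nvec d v j)) (vsc (- PP (pv j) p) (nvec d v (pv j)))) m"
      using bc_cross by simp
    then show "bcoord d v j p * comp3 (cross3 (V j) (hom p)) m = PP j p * comp3 (nvec d v j) m - PP (pv j) p * comp3 (nvec d v (pv j)) m"
      by (simp add: comp3_vadd comp3_vsc)
  qed
  also have "\<dots> = 0"
    using sum_pv[of "\<lambda>j. PP j p * comp3 (nvec d v j) m"] by (simp add: sum_subtractf)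
  finally show ?thesis .
qed

definition Tv where "Tv x = ((\<Sum>j<d. fst (V j) * x j), (\<Sum>j<d. fst (snd (V j)) * x j), (\<Sum>j<d. snd (snd (V j)) * x j))"

lemma snd_snd_V: "snd (snd (V j)) = 1" by (simp add: vv_def hom_def)

lemma Tv_wach: "Tv (\<lambda>j. bcoord d v j p) = vsc (\<Sum>j<d. bcoord d v j p) (hom p)"
proof -
  obtain px py where p: "p = (px, py)" by (cases p)
  have c0: "(\<Sum>j<d. bcoord d v j p * comp3 (cross3 (V j) (hom p)) 0) = 0" by (rule wach_cross_comp)
  have c1: "(\<Sum>j<d. bcoord d v j p * comp3 (cross3 (V j) (hom p)) (Suc 0)) = 0" by (rule wach_cross_comp)
  have e0: "comp3 (cross3 (V j) (hom p)) 0 = fst (snd (V j)) - py" for j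
    using snd_snd_V[of j] by (cases "V j") (simp add: p hom_def)
  have e1: "comp3 (cross3 (V j) (hom p)) (Suc 0) = px - fst (V j)" for j
    using snd_snd_V[of j] by (cases "V j") (simp add: p hom_def)
  have "(\<Sum>j<d. bcoord d v j p * comp3 (cross3 (V j) (hom p)) 0) = (\<Sum>j<d. fst (snd (V j)) * bcoord d v j p) - py * (\<Sum>j<d. bcoord d v j p)"
    by (simp add: e0 sum_subtractf sum_distrib_left algebra_simps)
  with c0 have A: "(\<Sum>j<d. fst (snd (V j)) * bcoord d v j p) = py * (\<Sum>j<d. bcoord d v j p)" by simp
  have "(\<Sum>j<d. bcoord d v j p * comp3 (cross3 (V j) (hom p)) (Suc 0)) = px * (\<Sum>j<d. bcoord d v j p) - (\<Sum>j<d. fst (V j) * bcoord d v j p)"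
    by (simp add: e1 sum_subtractf sum_distrib_left algebra_simps)
  with c1 have B: "(\<Sum>j<d. fst (V j) * bcoord d v j p) = px * (\<Sum>j<d. bcoord d v j p)" by simp
  show ?thesis using A B unfolding Tv_def vsc_def hom_def p
    by (simp add: snd_snd_V mult.commute)
qed

definition LamV where "LamV k x = vadd (vsc (x (sc k) / alpha d v (k+1)) (nvec d v (k+1)))
                                       (vsc (- x (k mod d) / alpha d v k) (nvec d v (pv k)))"

lemma sum_Lam: "(\<Sum>i<d. Lam d v k m i * x i) = comp3 (LamV k x) m"
proof -
  have pt: "Lam d v k m i * x i = (if i = sc k then comp3 (nvec d v (k + 1)) m / alpha d v (k + 1) * x i else 0)
       - (if i = k mod d then comp3 (nvec d v (pv k)) m / alpha d v k * x i else 0)" for i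
    by (simp add: Lam_def algebra_simps)
  have "(\<Sum>i<d. Lam d v k m i * x i) =
     (\<Sum>i<d. (if i = sc k then comp3 (nvec d v (k + 1)) m / alpha d v (k + 1) * x i else 0))
     - (\<Sum>i<d. (if i = k mod d then comp3 (nvec d v (pv k)) m / alpha d v k * x i else 0))"
    unfolding pt by (rule sum_subtractf)
  also have "\<dots> = comp3 (nvec d v (k + 1)) m / alpha d v (k + 1) * x (sc k)
                 - comp3 (nvec d v (pv k)) m / alpha d v k * x (k mod d)"
    using dpos by (simp add: sum.delta)
  finally show ?thesis by (simp add: LamV_def comp3_vadd comp3_vsc algebra_simps)
qed

lemma comp3_Tv: "m < 3 \<Longrightarrow> comp3 (Tv x) m = (\<Sum>j<d. tau d v m j * x j)"
proof -
  assume "m < 3"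
  then consider "m = 0" | "m = 1" | "m = 2" by arith
  then show ?thesis by cases (simp_all add: Tv_def tau_def comp3_0 comp3_1 comp3_2 comp3_Suc0)
qed

lemma qeval_Qk: "qeval d (Qk d v k) x = dot3 (LamV k x) (Tv x)"
proof -
  have "qeval d (Qk d v k) x = (\<Sum>m<3. qeval d (linmul d (Lam d v k m) (tau d v m)) x)"
    unfolding Qk_def by (rule qeval_sum_c)
  also have "\<dots> = (\<Sum>m<3. comp3 (LamV k x) m * comp3 (Tv x) m)"
    by (intro sum.cong refl) (simp add: qeval_linmul sum_Lam comp3_Tv)
  also have "\<dots> = dot3 (LamV k x) (Tv x)" by (rule sum_comp3_dot)
  finally show ?thesis .
qed

lemma Qk_center: "x \<in> center d v \<Longrightarrow> qeval d (Qk d v k) x = 0"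
proof -
  assume "x \<in> center d v"
  then have "\<forall>m<3. comp3 (Tv x) m = 0" by (simp add: center_def comp3_Tv)
  then have z: "comp3 (Tv x) 0 = 0" "comp3 (Tv x) 1 = 0" "comp3 (Tv x) 2 = 0" by auto
  have "Tv x = (comp3 (Tv x) 0, comp3 (Tv x) 1, comp3 (Tv x) 2)"
    by (cases "Tv x") simp
  then have "Tv x = (0,0,0)" using z by simp
  then show ?thesis by (cases "LamV k x") (simp add: qeval_Qk)
qed

lemma Qk_image: "k < d \<Longrightarrow> qeval d (Qk d v k) (\<lambda>j. bcoord d v j p) = 0"
proof -
  assume k: "k < d"
  let ?b = "\<lambda>j. bcoord d v j p"
  have sk: "sc k < d" by (rule sc_lt)
  have pvsk: "pv (sc k) = k" using pv_sc[OF k] .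
  have am: "alpha d v (sc k) = alpha d v (k + 1)" using alpha_mod[of "Suc k"] by simp
  have g1: "bcoord d v (sc k) p / alpha d v (k + 1) = (\<Prod>m\<in>{0..<d} - {k, sc k}. ell d v m p)"
  proof -
    have "bcoord d v (sc k) p = alpha d v (k + 1) * (\<Prod>m\<in>{0..<d} - {k, sc k}. ell d v m p)"
      using bc_split[OF sk, of p] unfolding pvsk am .
    then show ?thesis using alpha_nz[of "k+1"] by simp
  qed
  have g2: "bcoord d v (k mod d) p / alpha d v k = (\<Prod>m\<in>{0..<d} - {pv k, k}. ell d v m p)"
  proof -
    have "bcoord d v (k mod d) p = alpha d v k * (\<Prod>m\<in>{0..<d} - {pv k, k}. ell d v m p)"
      using bc_split[OF k, of p] k by simp
    then show ?thesis using alpha_nz[of k] by simp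
  qed
  have e1: "ell d v (k+1) p = ell d v (sc k) p"
    by (simp add: ell_lh lh_mod[of "Suc k"])
  have "dot3 (LamV k ?b) (hom p) =
        bcoord d v (sc k) p / alpha d v (k + 1) * ell d v (k+1) p
      - bcoord d v (k mod d) p / alpha d v k * ell d v (pv k) p"
    by (simp add: LamV_def dot3_vadd1 dot3_vsc1 dot_nvec_hom)
  also have "\<dots> = 0"
  proof -
    have "(\<Prod>m\<in>{0..<d} - {k, sc k}. ell d v m p) * ell d v (sc k) p = PP k p"
      using PP_split2[OF sk] pvsk by (simp add: mult.commute)
    moreover have "(\<Prod>m\<in>{0..<d} - {pv k, k}. ell d v m p) * ell d v (pv k) p = PP k p"
      using PP_split1[OF k] by (simp add: mult.commute)
    ultimately show ?thesis unfolding g1 g2 e1 by simp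
  qed
  finally have 0: "dot3 (LamV k ?b) (hom p) = 0" .
  show ?thesis by (simp add: qeval_Qk Tv_wach dot3_vsc2 0)
qed

end


lemma sum3_dot_div: "(\<Sum>m<3. comp3 n m / a * comp3 w m) = dot3 n w / (a::'a::field)"
  by (cases n; cases w) (simp add: sum3 add_divide_distrib)

context wp begin

definition LV where "LV k a b = (if a = sc k then L (k+1) b / alpha d v (k+1) else 0)
   - (if a = k mod d then L (pv k) b / alpha d v k else 0)"

lemma dot_nvec_V: "dot3 (nvec d v m) (V b) = L m b"
  by (simp add: L_lh lh_dot)

lemma sum_Lam_V: "(\<Sum>m<3. Lam d v k m a * comp3 (V b) m) = LV k a b"
proof -
  have "(\<Sum>m<3. Lam d v k m a * comp3 (V b) m) =
      (if a = sc k then (\<Sum>m<3. comp3 (nvec d v (k+1)) m / alpha d v (k+1) * comp3 (V b) m) else 0)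
    - (if a = k mod d then (\<Sum>m<3. comp3 (nvec d v (pv k)) m / alpha d v k * comp3 (V b) m) else 0)"
    by (simp add: Lam_def sum3 algebra_simps)
  also have "\<dots> = LV k a b"
    by (simp only: sum3_dot_div dot_nvec_V LV_def)
  finally show ?thesis .
qed

lemma Qk_entry: "Qk d v k a b = (if a < b \<and> b < d then LV k a b + LV k b a
    else if a = b \<and> b < d then LV k a a else 0)"
proof -
  have "Qk d v k a b = (\<Sum>m<3. linmul d (Lam d v k m) (tau d v m) a b)" by (simp add: Qk_def)
  also have "\<dots> = (if a < b \<and> b < d then (\<Sum>m<3. Lam d v k m a * comp3 (V b) m) + (\<Sum>m<3. Lam d v k m b * comp3 (V a) m)
    else if a = b \<and> b < d then (\<Sum>m<3. Lam d v k m a * comp3 (V a) m) else 0)"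
    by (auto simp: linmul_def tau_def sum.distrib)
  also have "\<dots> = (if a < b \<and> b < d then LV k a b + LV k b a
    else if a = b \<and> b < d then LV k a a else 0)"
    by (simp only: sum_Lam_V)
  finally show ?thesis .
qed

lemma Qk_S2: "Qk d v k \<in> S2 d"
  by (auto simp: S2_def Qk_entry split: if_splits)

lemma F1: "L (Suc k) (sc k) = 0" by (rule L_zero_of) simp
lemma F2: "L (Suc k) (sc (sc k)) = 0" by (rule L_zero_of) (simp add: mod_Suc_eq)
lemma F3: "k < d \<Longrightarrow> L (pv k) k = 0"
  by (rule L_zero_of) (simp add: sc_pv)
lemma F4: "L (pv k) (pv k) = 0" by (rule L_zero_of) simp
lemma F5: "k < d \<Longrightarrow> L (Suc k) k = alpha d v (Suc k)"
proof -
  assume k: "k < d"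
  have "V (pv (Suc k)) = V k"
  proof (rule V_cong)
    have "pv (Suc k) = pv (sc k)" by (simp add: prev_mod[of "Suc k", symmetric])
    then show "pv (Suc k) mod d = k mod d" using pv_sc[OF k] by simp
  qed
  then show ?thesis by (simp add: L_def alpha_def det3_cyc[of "V k"])
qed
lemma F6: "k < d \<Longrightarrow> L (pv k) (sc k) = alpha d v k"
proof -
  assume k: "k < d"
  show ?thesis by (simp add: L_def alpha_def V_sc_pv[OF k] V_mod)
qed

lemma LV_self: "k < d \<Longrightarrow> a < d \<Longrightarrow> LV k a a = 0"
  using sc_ne[of k] by (auto simp: LV_def F1 F3)

lemma LV_adj: "k < d \<Longrightarrow> a < d \<Longrightarrow> LV k a (sc a) + LV k (sc a) a = 0"
proof -
  assume k: "k < d" and a: "a < d"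
  have kk: "k mod d = k" using k by simp
  consider "a = k" | "a = sc k" | "sc a = k" | "a \<noteq> k \<and> a \<noteq> sc k \<and> sc a \<noteq> k \<and> sc a \<noteq> sc k"
    using sc_inj[OF a k] by blast
  then show ?thesis
  proof cases
    case 1
    have "k \<noteq> sc k" using sc_ne[OF k] by simp
    then show ?thesis using 1 alpha_nz[of k] alpha_nz[of "k+1"] by (simp add: LV_def kk F5[OF k] F6[OF k])
  next
    case 2
    have "sc (sc k) \<noteq> sc k" using sc_ne[OF sc_lt] by blast
    moreover have "sc (sc k) \<noteq> k" using scsc_ne[OF k] .
    moreover have "sc k \<noteq> k" using sc_ne[OF k] .
    ultimately show ?thesis using 2 by (simp add: LV_def kk F2)
  next
    case 3
    then have "a = pv k" using pv_sc[OF a] by simp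
    moreover have "pv k \<noteq> sc k" using sc_ne_pv[OF k] by simp
    moreover have "pv k \<noteq> k" using pv_ne[OF k] .
    moreover have "k \<noteq> sc k" using sc_ne[OF k] by simp
    ultimately show ?thesis using 3 by (simp add: LV_def kk F4)
  next
    case 4 then show ?thesis by (simp add: LV_def kk)
  qed
qed

lemma Qk_diag: "k < d \<Longrightarrow> diag_supported d (Qk d v k)"
  unfolding diag_supported_def
proof (intro allI impI)
  fix i j assume k: "k < d" and i: "i < d" and j: "j < d" and h: "j = prev d i \<or> j = i \<or> j = (i + 1) mod d"
  from h consider "j = i" | "j = sc i" | "j = pv i" by auto
  then show "Qk d v k i j = 0"
  proof cases
    case 1 then show ?thesis using LV_self[OF k i] i by (simp add: Qk_entry)
  next
    case 2
    have "i \<noteq> j" using 2 sc_ne[OF i] by simp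
    show ?thesis
    proof (cases "i < j")
      case True
      then have "Qk d v k i j = LV k i j + LV k j i" using j by (simp add: Qk_entry)
      also have "\<dots> = 0" unfolding 2 by (rule LV_adj[OF k i])
      finally show ?thesis .
    next
      case False then show ?thesis using \<open>i \<noteq> j\<close> by (simp add: Qk_entry)
    qed
  next
    case 3
    then have ij: "i = sc j" using sc_pv[OF i] by simp
    have "i \<noteq> j" using 3 pv_ne[OF i] by simp
    show ?thesis
    proof (cases "i < j")
      case True
      then have "Qk d v k i j = LV k i j + LV k j i" using j by (simp add: Qk_entry)
      also have "\<dots> = LV k j (sc j) + LV k (sc j) j" unfolding ij by simp
      also have "\<dots> = 0" by (rule LV_adj[OF k j])
      finally show ?thesis .
    next
      case False then show ?thesis using \<open>i \<noteq> j\<close> by (simp add: Qk_entry)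
    qed
  qed
qed

lemma Qk_IW2: "k < d \<Longrightarrow> Qk d v k \<in> IW2 d v"
  using Qk_S2 Qk_image by (simp add: IW2_def)

lemma Qk_D: "k < d \<Longrightarrow> Qk d v k \<in> {c \<in> S2 d. diag_supported d c \<and> vanishes_on_center d v c}"
  using Qk_S2 Qk_diag Qk_center by (simp add: vanishes_on_center_def)

end


lemma S2_lower: "c \<in> S2 d \<Longrightarrow> b < a \<Longrightarrow> c a b = 0"
proof (rule ccontr)
  assume "c \<in> S2 d" "b < a" "c a b \<noteq> 0"
  then have "a \<le> b" unfolding S2_def by blast
  with \<open>b < a\<close> show False by simp
qed

lemma S2_sym_zero: "c \<in> S2 d \<Longrightarrow> a \<noteq> b \<Longrightarrow> c a b + c b a = 0 \<Longrightarrow> c a b = 0 \<and> c b a = 0"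
proof -
  assume c: "c \<in> S2 d" and ab: "a \<noteq> b" and s: "c a b + c b a = 0"
  show ?thesis
  proof (cases "a < b")
    case True then have "c b a = 0" using S2_lower[OF c] by blast
    then show ?thesis using s by simp
  next
    case False then have "b < a" using ab by simp
    then have "c a b = 0" using S2_lower[OF c] by blast
    then show ?thesis using s by simp
  qed
qed

lemma qeval_supp1: "i < d \<Longrightarrow> (\<And>j. j < d \<Longrightarrow> j \<noteq> i \<Longrightarrow> x j = 0) \<Longrightarrow> qeval d c x = c i i * x i * x i"
  using qeval_supp[of "{i}" d x c] by simp

lemma qeval_supp2: "a < d \<Longrightarrow> b < d \<Longrightarrow> a \<noteq> b \<Longrightarrow> (\<And>j. j < d \<Longrightarrow> j \<noteq> a \<Longrightarrow> j \<noteq> b \<Longrightarrow> x j = 0) \<Longrightarrow>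
   qeval d c x = c a a * x a * x a + c b b * x b * x b + (c a b + c b a) * x a * x b"
  using qeval_supp[of "{a,b}" d x c] by (simp add: algebra_simps)

context wp begin

lemma bc_zero: "j < d \<Longrightarrow> m < d \<Longrightarrow> m \<noteq> pv j \<Longrightarrow> m \<noteq> j \<Longrightarrow> ell d v m p = 0 \<Longrightarrow> bcoord d v j p = 0"
proof -
  assume j: "j < d" and m: "m < d" "m \<noteq> pv j" "m \<noteq> j" and e: "ell d v m p = 0"
  have "m \<in> {0..<d} - {pv j, j}" using m by simp
  then have "(\<Prod>m\<in>{0..<d} - {pv j, j}. ell d v m p) = 0"
    using e by (intro prod_zero) auto
  then show ?thesis by (simp add: bc_split[OF j])
qed

lemma IW2_eval: "c \<in> IW2 d v \<Longrightarrow> qeval d c (\<lambda>j. bcoord d v j p) = 0"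
  unfolding IW2_def by blast

lemma bc_nz: "j < d \<Longrightarrow> (\<And>m. m < d \<Longrightarrow> m \<noteq> pv j \<Longrightarrow> m \<noteq> j \<Longrightarrow> ell d v m p \<noteq> 0) \<Longrightarrow> bcoord d v j p \<noteq> 0"
  by (simp add: bc_split alpha_nz)

lemma hom_v: "i < d \<Longrightarrow> hom (v i) = V i" by (simp add: vv_def)

lemma ell_vertex: "i < d \<Longrightarrow> ell d v m (v i) = L m i"
  by (simp add: ell_lh hom_v L_lh)

lemma IW2_diag0: "c \<in> IW2 d v \<Longrightarrow> i < d \<Longrightarrow> c i i = 0"
proof -
  assume c: "c \<in> IW2 d v" and i: "i < d"
  let ?x = "\<lambda>j. bcoord d v j (v i)"
  have z: "?x j = 0" if j: "j < d" "j \<noteq> i" for j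
  proof (cases "i = pv j")
    case False
    show ?thesis by (rule bc_zero[OF j(1) i False]) (use j in \<open>simp_all add: ell_vertex[OF i] L_self1\<close>)
  next
    case True
    have "pv i \<noteq> pv j" using pv_inj[OF i j(1)] j by blast
    moreover have "pv i \<noteq> j" using True sc_pv[OF j(1)] sc_ne_pv[OF i] by auto
    moreover have "ell d v (pv i) (v i) = 0" using ell_vertex[OF i] F3[OF i] by simp
    ultimately show ?thesis using bc_zero[OF j(1) pv_lt] by blast
  qed
  have nz: "?x i \<noteq> 0"
  proof (rule bc_nz[OF i])
    fix m assume m: "m < d" "m \<noteq> pv i" "m \<noteq> i"
    have "i \<noteq> sc m" using m pv_sc[OF m(1)] by auto
    then show "ell d v m (v i) \<noteq> 0" using L_nz[OF m(1) i] m by (simp add: ell_vertex[OF i])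
  qed
  have "qeval d c ?x = 0" using c by (rule IW2_eval)
  then have "c i i * ?x i * ?x i = 0" using qeval_supp1[OF i, of ?x c] z by simp
  then show ?thesis using nz by simp
qed

definition mid where "mid i = ((fst (v i) + fst (v (sc i))) / 2, (snd (v i) + snd (v (sc i))) / 2)"

lemma hom_mid: "i < d \<Longrightarrow> hom (mid i) = vsc (1/2) (vadd (V i) (V (sc i)))"
  by (simp add: mid_def hom_def vv_def vsc_def vadd_def add_divide_distrib)

lemma ell_mid: "i < d \<Longrightarrow> ell d v m (mid i) = (L m i + L m (sc i)) / 2"
  by (simp add: ell_lh hom_mid lh_def det3_sc3 det3_add3 L_def)

lemma ell_mid_nz: "i < d \<Longrightarrow> m < d \<Longrightarrow> m \<noteq> i \<Longrightarrow> ell d v m (mid i) \<noteq> 0"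
proof -
  assume i: "i < d" and m: "m < d" "m \<noteq> i"
  have n1: "sg * L m i \<ge> 0" "sg * L m (sc i) \<ge> 0" using L_nonneg[OF m(1)] i sc_lt by auto
  have sgnz: "sg \<noteq> 0" using sg_prop by auto
  have "L m i \<noteq> 0 \<or> L m (sc i) \<noteq> 0"
  proof (rule ccontr)
    assume "\<not> ?thesis"
    then have "L m i = 0" "L m (sc i) = 0" by auto
    then have a: "i = m \<or> i = sc m" and b: "sc i = m \<or> sc i = sc m"
      using L_zero_iff[OF m(1) i] L_zero_iff[OF m(1) sc_lt] by auto
    from a m have "i = sc m" by auto
    with b show False using scsc_ne[OF m(1)] sc_ne[OF i] by auto
  qed
  then have "sg * L m i \<noteq> 0 \<or> sg * L m (sc i) \<noteq> 0" using sgnz by simp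
  then have "sg * L m i > 0 \<or> sg * L m (sc i) > 0" using n1 by (metis order_le_neq_trans)
  then have "sg * L m i + sg * L m (sc i) > 0" using n1 by (auto intro: add_pos_nonneg add_nonneg_pos)
  then have "sg * (L m i + L m (sc i)) > 0" by (simp add: distrib_left)
  then have "L m i + L m (sc i) \<noteq> 0" by auto
  then show ?thesis by (simp add: ell_mid[OF i])
qed

lemma IW2_adj0: "c \<in> IW2 d v \<Longrightarrow> i < d \<Longrightarrow> c i (sc i) = 0 \<and> c (sc i) i = 0"
proof -
  assume c: "c \<in> IW2 d v" and i: "i < d"
  let ?x = "\<lambda>j. bcoord d v j (mid i)"
  have si: "sc i < d" "sc i \<noteq> i" using sc_lt sc_ne[OF i] by auto
  have z: "?x j = 0" if j: "j < d" "j \<noteq> i" "j \<noteq> sc i" for j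
  proof (rule bc_zero[OF j(1) i])
    show "i \<noteq> pv j" using j sc_pv[OF j(1)] by auto
    show "i \<noteq> j" using j by simp
    show "ell d v i (mid i) = 0" by (simp add: ell_mid[OF i] L_self1 L_zero_of)
  qed
  have nz1: "?x i \<noteq> 0" by (rule bc_nz[OF i]) (rule ell_mid_nz[OF i], auto)
  have nz2: "?x (sc i) \<noteq> 0"
    by (rule bc_nz[OF si(1)]) (rule ell_mid_nz[OF i], auto simp: pv_sc[OF i])
  have "qeval d c ?x = 0" using c by (rule IW2_eval)
  then have "(c i (sc i) + c (sc i) i) * ?x i * ?x (sc i) = 0"
    using qeval_supp2[OF i si(1) si(2)[symmetric], of ?x c] z IW2_diag0[OF c i] IW2_diag0[OF c si(1)] by simp
  then have "c i (sc i) + c (sc i) i = 0" using nz1 nz2 by simp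
  then show ?thesis using S2_sym_zero[of c d i "sc i"] c si by (simp add: IW2_def)
qed

lemma IW2_diag: "c \<in> IW2 d v \<Longrightarrow> diag_supported d c"
  unfolding diag_supported_def
proof (intro allI impI)
  fix i j assume c: "c \<in> IW2 d v" and i: "i < d" and j: "j < d" and h: "j = prev d i \<or> j = i \<or> j = (i + 1) mod d"
  from h consider "j = i" | "j = sc i" | "j = pv i" by auto
  then show "c i j = 0"
  proof cases
    case 1 then show ?thesis using IW2_diag0[OF c i] by simp
  next
    case 2 then show ?thesis using IW2_adj0[OF c i] by simp
  next
    case 3 then have "i = sc j" using sc_pv[OF i] by simp
    then show ?thesis using IW2_adj0[OF c j] by simp
  qed
qed

end


lemma poly_zero_cofinite:
  fixes q :: "'a::linordered_field poly"
  assumes "\<And>e. e \<noteq> 0 \<Longrightarrow> e \<noteq> r \<Longrightarrow> poly q e = 0"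
  shows "q = 0"
proof (rule ccontr)
  assume "q \<noteq> 0"
  then have f: "finite {x. poly q x = 0}" by (rule poly_roots_finite)
  have "UNIV - {0, r} \<subseteq> {x. poly q x = 0}" using assms by auto
  then have "finite (UNIV - {0, r} :: 'a set)" using f finite_subset by blast
  then have "finite (UNIV :: 'a set)" by simp
  then show False using infinite_UNIV_char_0 by blast
qed

lemma prod_pos_zero_split:
  "finite A \<Longrightarrow> k \<in> A \<Longrightarrow> prod f A = f k * prod f (A - {k})"
  by (rule prod.remove)

context wp begin

definition MM where "MM j = {0..<d} - {pv j, j}"

lemma MM_fin: "finite (MM j)" by (simp add: MM_def)
lemma MM_mem: "m \<in> MM j \<longleftrightarrow> m < d \<and> m \<noteq> pv j \<and> m \<noteq> j" by (auto simp: MM_def)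

lemma card_MM: "j < d \<Longrightarrow> card (MM j) = d - 2"
proof -
  assume j: "j < d"
  have "{pv j, j} \<subseteq> {0..<d}" using j pv_lt by auto
  moreover have "card {pv j, j} = 2" using pv_ne[OF j] by simp
  ultimately show ?thesis unfolding MM_def by (simp add: card_Diff_subset)
qed

definition bh where "bh j P = alpha d v j * (\<Prod>m\<in>MM j. lh m P)"

lemma bc_bh: "j < d \<Longrightarrow> bcoord d v j p = bh j (hom p)"
  by (simp add: bc_split bh_def MM_def ell_lh)

lemma lh_scale: "z \<noteq> 0 \<Longrightarrow> lh m (x, y, z) = z * ell d v m (x / z, y / z)"
proof -
  assume z: "z \<noteq> 0"
  have "(x, y, z) = vsc z (hom (x / z, y / z))" using z by (simp add: vsc_def hom_def)
  then show ?thesis by (simp add: ell_lh lh_def det3_sc3)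
qed

lemma bh_hom_zero: "c \<in> IW2 d v \<Longrightarrow> z \<noteq> 0 \<Longrightarrow> qeval d c (\<lambda>j. bh j (x, y, z)) = 0"
proof -
  assume c: "c \<in> IW2 d v" and z: "z \<noteq> 0"
  let ?p = "(x / z, y / z)"
  have "bh j (x, y, z) = z ^ (d - 2) * bcoord d v j ?p" if j: "j < d" for j
  proof -
    have "bh j (x, y, z) = alpha d v j * (\<Prod>m\<in>MM j. z * ell d v m ?p)"
      by (simp add: bh_def lh_scale[OF z])
    also have "\<dots> = alpha d v j * (z ^ card (MM j) * (\<Prod>m\<in>MM j. ell d v m ?p))"
      by (simp add: prod.distrib)
    also have "\<dots> = z ^ (d - 2) * bcoord d v j ?p"
      by (simp add: card_MM[OF j] bc_bh[OF j] bh_def ell_lh)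
    finally show ?thesis .
  qed
  then have "qeval d c (\<lambda>j. bh j (x, y, z)) = qeval d c (\<lambda>j. z ^ (d - 2) * bcoord d v j ?p)"
    by (intro qeval_cong) simp
  also have "\<dots> = 0" by (simp add: qeval_scale IW2_eval[OF c])
  finally show ?thesis .
qed

lemma bh_zero: "c \<in> IW2 d v \<Longrightarrow> snd (snd P) \<noteq> 0 \<Longrightarrow> qeval d c (\<lambda>j. bh j P) = 0"
  using bh_hom_zero[of c "snd (snd P)" "fst P" "fst (snd P)"] by (cases P) simp

lemma lh_vadd: "lh m (vadd P Q) = lh m P + lh m Q" by (simp add: lh_def det3_add3)
lemma lh_vsc: "lh m (vsc t P) = t * lh m P" by (simp add: lh_def det3_sc3)

definition nadj where "nadj i k \<longleftrightarrow> i < d \<and> k < d \<and> k \<noteq> i \<and> k \<noteq> sc i \<and> k \<noteq> pv i"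


definition PIK where "PIK i k = cross3 (nvec d v i) (nvec d v k)"

lemma lh_PIK: "lh m (PIK i k) = det3 (nvec d v m) (nvec d v i) (nvec d v k)"
  by (simp add: PIK_def lh_dot det3_def)

lemma lh_PIK_i: "lh i (PIK i k) = 0" by (simp add: lh_PIK det3_rep1)
lemma lh_PIK_k: "lh k (PIK i k) = 0" by (simp add: lh_PIK det3_rep3)
lemma lh_PIK_nz: "nadj i k \<Longrightarrow> m < d \<Longrightarrow> m \<noteq> i \<Longrightarrow> m \<noteq> k \<Longrightarrow> lh m (PIK i k) \<noteq> 0"
proof -
  assume ik: "nadj i k" and m: "m < d" "m \<noteq> i" "m \<noteq> k"
  have a: "i < d" "k < d" "i \<noteq> k" using ik unfolding nadj_def by auto
  show ?thesis unfolding lh_PIK by (rule ntc'[OF m(1) a(1) a(2) m(2) a(3) m(3)])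
qed

definition Yf where "Yf i k a = alpha d v a * (\<Prod>m\<in>MM a - {k}. lh m (PIK i k))"
definition Zf where "Zf i k b = alpha d v b * (\<Prod>m\<in>MM b - {i}. lh m (PIK i k))"

definition Esum where "Esum c i k = (\<Sum>a\<in>{i, sc i}. \<Sum>b\<in>{k, sc k}. (c a b + c b a) * Yf i k a * Zf i k b)"

lemma nadj_facts: "nadj i k \<Longrightarrow> i < d \<and> k < d \<and> k \<noteq> i \<and> k \<noteq> sc i \<and> k \<noteq> pv i \<and> i \<noteq> sc k \<and> i \<noteq> pv k
   \<and> sc i \<noteq> k \<and> sc i \<noteq> sc k \<and> sc i \<noteq> i \<and> sc k \<noteq> k \<and> sc k \<noteq> i"
proof -
  assume "nadj i k"
  then have a: "i < d" "k < d" "k \<noteq> i" "k \<noteq> sc i" "k \<noteq> pv i" unfolding nadj_def by auto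
  have "i \<noteq> sc k"
  proof
    assume "i = sc k" then have "pv i = k" using pv_sc[OF a(2)] by simp
    then show False using a(5) by simp
  qed
  moreover have "i \<noteq> pv k"
  proof
    assume "i = pv k" then have "sc i = k" using sc_pv[OF a(2)] by simp
    then show False using a(4) by simp
  qed
  moreover have "sc i \<noteq> sc k" using sc_inj[OF a(1) a(2)] a(3) by blast
  moreover note a sc_ne[OF a(1)] sc_ne[OF a(2)]
  ultimately show ?thesis by simp
qed

lemma nadj_sym: "nadj i k \<Longrightarrow> nadj k i"
proof -
  assume "nadj i k"
  note f = nadj_facts[OF this]
  show "nadj k i" unfolding nadj_def using f by blast
qed

lemma diag_facts: "diag_supported d c \<Longrightarrow> a < d \<Longrightarrow> c a a = 0 \<and> c a (sc a) = 0 \<and> c (sc a) a = 0"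
proof -
  assume dg: "diag_supported d c" and a: "a < d"
  have D: "\<And>i j. i < d \<Longrightarrow> j < d \<Longrightarrow> j = prev d i \<or> j = i \<or> j = (i + 1) mod d \<Longrightarrow> c i j = 0"
    using dg unfolding diag_supported_def by blast
  have s: "sc a < d" by (rule sc_lt)
  have 1: "c a a = 0" using D[OF a a] by simp
  have 2: "c a (sc a) = 0" using D[OF a s] by simp
  have 3: "c (sc a) a = 0" using D[OF s a] pv_sc[OF a] by simp
  show ?thesis using 1 2 3 by simp
qed

lemma qeval_YZ:
  assumes dg: "diag_supported d c" and ik: "nadj i k"
    and y: "\<And>j. j < d \<Longrightarrow> j \<noteq> i \<Longrightarrow> j \<noteq> sc i \<Longrightarrow> y j = 0"
    and z: "\<And>j. j < d \<Longrightarrow> j \<noteq> k \<Longrightarrow> j \<noteq> sc k \<Longrightarrow> z j = 0"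
  shows "qeval d c (\<lambda>j. y j + z j) = (\<Sum>a\<in>{i, sc i}. \<Sum>b\<in>{k, sc k}. (c a b + c b a) * y a * z b)"
proof -
  have f: "i < d" "k < d" "k \<noteq> i" "k \<noteq> sc i" "k \<noteq> pv i" "i \<noteq> sc k" "i \<noteq> pv k"
     "sc i \<noteq> i" "sc k \<noteq> k" using nadj_facts[OF ik] by auto
  have dz: "c a a = 0" "c a (sc a) = 0" "c (sc a) a = 0" if "a < d" for a
    using diag_facts[OF dg that] by auto
  have qy: "qeval d c y = 0"
  proof -
    have "qeval d c y = c i i * y i * y i + c (sc i) (sc i) * y (sc i) * y (sc i) + (c i (sc i) + c (sc i) i) * y i * y (sc i)"
      by (rule qeval_supp2[OF f(1) sc_lt f(8)[symmetric]]) (rule y)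
    also have "\<dots> = 0" using dz[OF f(1)] dz[OF sc_lt[of i]] by simp
    finally show ?thesis .
  qed
  have qz: "qeval d c z = 0"
  proof -
    have "qeval d c z = c k k * z k * z k + c (sc k) (sc k) * z (sc k) * z (sc k) + (c k (sc k) + c (sc k) k) * z k * z (sc k)"
      by (rule qeval_supp2[OF f(2) sc_lt f(9)[symmetric]]) (rule z)
    also have "\<dots> = 0" using dz[OF f(2)] dz[OF sc_lt[of k]] by simp
    finally show ?thesis .
  qed
  have "bil d c y z = (\<Sum>a\<in>{i, sc i}. \<Sum>b\<in>{k, sc k}. (c a b + c b a) * y a * z b)"
  proof (rule bil_supp)
    show "{i, sc i} \<subseteq> {..<d}" "{k, sc k} \<subseteq> {..<d}" using f(1,2) sc_lt by auto
    show "y j = 0" if "j < d" "j \<notin> {i, sc i}" for j using that by (intro y) auto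
    show "z j = 0" if "j < d" "j \<notin> {k, sc k}" for j using that by (intro z) auto
  qed
  then show ?thesis using qeval_add_x[of d c y z] qy qz by simp
qed

end


context wp begin

lemma third_V: "snd (snd (V j)) = 1" by (simp add: vv_def hom_def)

lemma IW2_E:
  assumes c: "c \<in> IW2 d v" and ik: "nadj i k"
  shows "Esum c i k = 0"
proof -
  note f = nadj_facts[OF ik]
  have i: "i < d" and k: "k < d" using f by auto
  define P where "P = PIK i k"
  define \<delta> where "\<delta> = vadd (V i) (V k)"
  define Pe where "Pe e = vadd P (vsc e \<delta>)" for e
  define lp where "lp m = [:lh m P, lh m \<delta>:]" for m
  have lp_ev: "poly (lp m) e = lh m (Pe e)" for m e
    by (simp add: lp_def Pe_def lh_vadd lh_vsc algebra_simps)
  define A where "A j \<longleftrightarrow> j = i \<or> j = sc i" for j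
  define B where "B j \<longleftrightarrow> j = k \<or> j = sc k" for j
  define Xp where "Xp j = (if A j then smult (alpha d v j * lh k \<delta>) (\<Prod>m\<in>MM j - {k}. lp m)
     else if B j then smult (alpha d v j * lh i \<delta>) (\<Prod>m\<in>MM j - {i}. lp m)
     else smult (alpha d v j * lh i \<delta> * lh k \<delta>) (pCons 0 (\<Prod>m\<in>MM j - {i, k}. lp m)))" for j
  have lkP: "lh k P = 0" and liP: "lh i P = 0" unfolding P_def by (rule lh_PIK_k, rule lh_PIK_i)
  have bhX: "bh j (Pe e) = e * poly (Xp j) e" if j: "j < d" for j e
  proof -
    have bh_eq: "bh j (Pe e) = alpha d v j * (\<Prod>m\<in>MM j. poly (lp m) e)"
      by (simp add: bh_def lp_ev)
    consider "A j" | "\<not> A j" "B j" | "\<not> A j" "\<not> B j" by blast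
    then show ?thesis
    proof cases
      case 1
      have kin: "k \<in> MM j"
      proof -
        have "k \<noteq> pv j \<and> k \<noteq> j" using 1 f pv_sc[OF i] unfolding A_def by auto
        then show ?thesis using k by (simp add: MM_mem)
      qed
      have "(\<Prod>m\<in>MM j. poly (lp m) e) = poly (lp k) e * (\<Prod>m\<in>MM j - {k}. poly (lp m) e)"
        by (rule prod.remove[OF MM_fin kin])
      also have "poly (lp k) e = e * lh k \<delta>" by (simp add: lp_def lkP)
      finally show ?thesis using 1 by (simp add: bh_eq Xp_def poly_prod)
    next
      case 2
      have iin: "i \<in> MM j"
      proof -
        have "i \<noteq> pv j \<and> i \<noteq> j" using 2 f pv_sc[OF k] unfolding B_def by auto
        then show ?thesis using i by (simp add: MM_mem)
      qed
      have "(\<Prod>m\<in>MM j. poly (lp m) e) = poly (lp i) e * (\<Prod>m\<in>MM j - {i}. poly (lp m) e)"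
        by (rule prod.remove[OF MM_fin iin])
      also have "poly (lp i) e = e * lh i \<delta>" by (simp add: lp_def liP)
      finally show ?thesis using 2 by (simp add: bh_eq Xp_def poly_prod)
    next
      case 3
      have jn: "j \<noteq> i" "j \<noteq> sc i" "j \<noteq> k" "j \<noteq> sc k" using 3 unfolding A_def B_def by auto
      have iin: "i \<in> MM j"
      proof -
        have "i \<noteq> pv j" using jn(2) sc_pv[OF j] by auto
        then show ?thesis using i jn by (simp add: MM_mem)
      qed
      have kin: "k \<in> MM j - {i}"
      proof -
        have "k \<noteq> pv j" using jn(4) sc_pv[OF j] by auto
        then show ?thesis using k jn f by (simp add: MM_mem)
      qed
      have "(\<Prod>m\<in>MM j. poly (lp m) e) = poly (lp i) e * (\<Prod>m\<in>MM j - {i}. poly (lp m) e)"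
        by (rule prod.remove[OF MM_fin iin])
      also have "(\<Prod>m\<in>MM j - {i}. poly (lp m) e) = poly (lp k) e * (\<Prod>m\<in>MM j - {i} - {k}. poly (lp m) e)"
        by (rule prod.remove) (use MM_fin kin in auto)
      also have "MM j - {i} - {k} = MM j - {i, k}" by auto
      also have "poly (lp i) e = e * lh i \<delta>" by (simp add: lp_def liP)
      also have "poly (lp k) e = e * lh k \<delta>" by (simp add: lp_def lkP)
      finally show ?thesis using 3 by (simp add: bh_eq Xp_def poly_prod algebra_simps)
    qed
  qed
  define qp where "qp = (\<Sum>a<d. \<Sum>b<d. smult (c a b) (Xp a * Xp b))"
  have qp_ev: "poly qp e = qeval d c (\<lambda>j. poly (Xp j) e)" for e
    by (simp add: qp_def qeval_def poly_sum algebra_simps)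
  have third: "snd (snd (Pe e)) = snd (snd P) + e * 2" for e
    by (cases P) (simp add: Pe_def \<delta>_def vadd_def vsc_def third_V)
  have "qp = 0"
  proof (rule poly_zero_cofinite[where r = "- snd (snd P) / 2"])
    fix e :: 'a assume e: "e \<noteq> 0" "e \<noteq> - snd (snd P) / 2"
    have "snd (snd (Pe e)) \<noteq> 0"
    proof
      assume "snd (snd (Pe e)) = 0"
      then have "e = - snd (snd P) / 2" using third[of e] by (simp add: field_simps)
      with e show False by simp
    qed
    then have "qeval d c (\<lambda>j. bh j (Pe e)) = 0" by (rule bh_zero[OF c])
    moreover have "qeval d c (\<lambda>j. bh j (Pe e)) = e * e * qeval d c (\<lambda>j. poly (Xp j) e)"
      by (simp add: qeval_cong[of d "\<lambda>j. bh j (Pe e)" "\<lambda>j. e * poly (Xp j) e"] bhX qeval_scale)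
    ultimately show "poly qp e = 0" using e(1) by (simp add: qp_ev)
  qed
  then have Q0: "qeval d c (\<lambda>j. poly (Xp j) 0) = 0" using qp_ev[of 0] by simp
  define y where "y j = (if A j then lh k \<delta> * Yf i k j else 0)" for j
  define z where "z j = (if B j then lh i \<delta> * Zf i k j else 0)" for j
  have AB: "\<not> (A j \<and> B j)" for j using f unfolding A_def B_def by auto
  have X0: "poly (Xp j) 0 = y j + z j" for j
    using AB[of j] by (auto simp: Xp_def y_def z_def Yf_def Zf_def poly_prod P_def lp_def)
  have "qeval d c (\<lambda>j. y j + z j) = (\<Sum>a\<in>{i, sc i}. \<Sum>b\<in>{k, sc k}. (c a b + c b a) * y a * z b)"
  proof (rule qeval_YZ[OF IW2_diag[OF c] ik])
    show "y j = 0" if "j < d" "j \<noteq> i" "j \<noteq> sc i" for j using that by (simp add: y_def A_def)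
    show "z j = 0" if "j < d" "j \<noteq> k" "j \<noteq> sc k" for j using that by (simp add: z_def B_def)
  qed
  also have "\<dots> = lh k \<delta> * lh i \<delta> * Esum c i k"
    unfolding Esum_def sum_distrib_left
    by (intro sum.cong refl) (auto simp: y_def z_def A_def B_def P_def algebra_simps)
  finally have "lh k \<delta> * lh i \<delta> * Esum c i k = 0" using Q0 X0 by simp
  moreover have "lh k \<delta> \<noteq> 0"
  proof -
    have "lh k \<delta> = L k i" by (simp add: \<delta>_def lh_vadd L_lh[symmetric] L_self1)
    then show ?thesis using L_nz[OF k i] f by auto
  qed
  moreover have "lh i \<delta> \<noteq> 0"
  proof -
    have "lh i \<delta> = L i k" by (simp add: \<delta>_def lh_vadd L_lh[symmetric] L_self1)
    then show ?thesis using L_nz[OF i k] f by auto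
  qed
  ultimately show ?thesis by simp
qed

end


lemma wach2_generic:
  fixes A B C E w :: "'a::comm_ring vec3"
  assumes P: "P = cross3 (cross3 B C) w"
  shows "vadd (vsc (det3 A B C * det3 C E P) B) (vsc (det3 B C E * det3 A B P) C) = vsc (det3 A B C * det3 B C E) P"
proof -
  have P2: "P = vadd (vsc (dot3 B w) C) (vsc (- dot3 C w) B)" using P by (simp add: cross_cross)
  have d1: "det3 C E P = - dot3 C w * det3 B C E"
    by (simp add: P2 det3_add3 det3_sc3 det3_rep3 det3_cyc[of C E B] det3_cyc[of E B C])
  have d2: "det3 A B P = dot3 B w * det3 A B C"
    by (simp add: P2 det3_add3 det3_sc3 det3_rep2)
  have "vadd (vsc (det3 A B C * det3 C E P) B) (vsc (det3 B C E * det3 A B P) C)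
     = vadd (vsc (det3 A B C * (- dot3 C w * det3 B C E)) B) (vsc (det3 B C E * (dot3 B w * det3 A B C)) C)"
    by (simp only: d1 d2)
  also have "\<dots> = vsc (det3 A B C * det3 B C E) (vadd (vsc (dot3 B w) C) (vsc (- dot3 C w) B))"
    by (cases B; cases C) (simp add: vadd_def vsc_def algebra_simps)
  finally show ?thesis using P2 by simp
qed

lemma cross_swap: "cross3 x y = cross3 y (vsc (-1) (x::'a::comm_ring_1 vec3))"
  by (cases x; cases y) (simp add: vsc_def algebra_simps)

context wp begin

definition GG where "GG a o' P = (\<Prod>m\<in>{0..<d} - {pv a, a, sc a, o'}. lh m P)"

lemma YG1: "a < d \<Longrightarrow> o' < d \<Longrightarrow> sc a \<noteq> o' \<Longrightarrow>
   (\<Prod>m\<in>MM a - {o'}. lh m P) = lh (sc a) P * GG a o' P"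
proof -
  assume a: "a < d" and o: "o' < d" "sc a \<noteq> o'"
  have "sc a \<in> MM a - {o'}" using o sc_lt sc_ne[OF a] sc_ne_pv[OF a] by (simp add: MM_mem)
  then have "(\<Prod>m\<in>MM a - {o'}. lh m P) = lh (sc a) P * (\<Prod>m\<in>MM a - {o'} - {sc a}. lh m P)"
    by (intro prod.remove) (auto simp: MM_def)
  also have "MM a - {o'} - {sc a} = {0..<d} - {pv a, a, sc a, o'}" by (auto simp: MM_def)
  finally show ?thesis by (simp add: GG_def)
qed

lemma YG2: "a < d \<Longrightarrow> o' < d \<Longrightarrow> pv a \<noteq> o' \<Longrightarrow>
   (\<Prod>m\<in>MM (sc a) - {o'}. lh m P) = lh (pv a) P * GG a o' P"
proof -
  assume a: "a < d" and o: "o' < d" "pv a \<noteq> o'"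
  have "pv a \<in> MM (sc a) - {o'}" using o pv_lt pv_ne[OF a] sc_ne_pv[OF a] pv_sc[OF a] by (simp add: MM_mem)
  then have "(\<Prod>m\<in>MM (sc a) - {o'}. lh m P) = lh (pv a) P * (\<Prod>m\<in>MM (sc a) - {o'} - {pv a}. lh m P)"
    by (intro prod.remove) (auto simp: MM_def)
  also have "MM (sc a) - {o'} - {pv a} = {0..<d} - {pv a, a, sc a, o'}"
    using pv_sc[OF a] by (auto simp: MM_def)
  finally show ?thesis by (simp add: GG_def)
qed

lemma wach2_loc: "a < d \<Longrightarrow> P = cross3 (nvec d v a) w \<Longrightarrow>
  vadd (vsc (alpha d v a * lh (sc a) P) (V a)) (vsc (alpha d v (sc a) * lh (pv a) P) (V (sc a)))
   = vsc (alpha d v a * alpha d v (sc a)) P"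
proof -
  assume a: "a < d" and P: "P = cross3 (nvec d v a) w"
  have e1: "alpha d v a = det3 (V (pv a)) (V a) (V (sc a))" by (simp add: alpha_def V_mod)
  have e2: "alpha d v (sc a) = det3 (V a) (V (sc a)) (V (Suc (sc a)))"
    by (simp add: alpha_def pv_sc[OF a])
  have e3: "lh (sc a) P = det3 (V (sc a)) (V (Suc (sc a))) P" by (simp add: lh_def)
  have e4: "lh (pv a) P = det3 (V (pv a)) (V a) P" by (simp add: lh_def V_sc_pv[OF a])
  have P': "P = cross3 (cross3 (V a) (V (sc a))) w" using P by (simp add: nvec_def V_mod)
  show ?thesis unfolding e1 e2 e3 e4 by (rule wach2_generic[OF P'])
qed

lemma sum_supp2: "a < d \<Longrightarrow> b < d \<Longrightarrow> a \<noteq> b \<Longrightarrow> (\<And>j. j < d \<Longrightarrow> j \<noteq> a \<Longrightarrow> j \<noteq> b \<Longrightarrow> x j = 0) \<Longrightarrow>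
  (\<Sum>j<d. g j * x j) = g a * x a + g b * (x b :: 'a)"
proof -
  assume ab: "a < d" "b < d" "a \<noteq> b" and x: "\<And>j. j < d \<Longrightarrow> j \<noteq> a \<Longrightarrow> j \<noteq> b \<Longrightarrow> x j = 0"
  have "(\<Sum>j<d. g j * x j) = (\<Sum>j\<in>{a, b}. g j * x j)"
    by (rule sum.mono_neutral_right) (use ab x in auto)
  then show ?thesis using ab by simp
qed

lemma Tv_supp2: "a < d \<Longrightarrow> b < d \<Longrightarrow> a \<noteq> b \<Longrightarrow> (\<And>j. j < d \<Longrightarrow> j \<noteq> a \<Longrightarrow> j \<noteq> b \<Longrightarrow> x j = 0) \<Longrightarrow>
  Tv x = vadd (vsc (x a) (V a)) (vsc (x b) (V b))"
proof -
  assume h: "a < d" "b < d" "a \<noteq> b" "\<And>j. j < d \<Longrightarrow> j \<noteq> a \<Longrightarrow> j \<noteq> b \<Longrightarrow> x j = 0"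
  show ?thesis unfolding Tv_def
    using sum_supp2[OF h, where g = "\<lambda>j. fst (V j)"] sum_supp2[OF h, where g = "\<lambda>j. fst (snd (V j))"]
      sum_supp2[OF h, where g = "\<lambda>j. snd (snd (V j))"]
    by (simp add: vadd_def vsc_def algebra_simps)
qed

lemma Tv_lin: "Tv (\<lambda>j. s * x j + t * y j) = vadd (vsc s (Tv x)) (vsc t (Tv y))"
  by (simp add: Tv_def vadd_def vsc_def sum.distrib sum_distrib_left algebra_simps)

lemma GG_nz: "nadj i k \<Longrightarrow> (a = i \<and> o' = k) \<or> (a = k \<and> o' = i) \<Longrightarrow> GG a o' (PIK i k) \<noteq> 0"
proof -
  assume ik: "nadj i k" and ao: "(a = i \<and> o' = k) \<or> (a = k \<and> o' = i)"
  have "lh m (PIK i k) \<noteq> 0" if m: "m \<in> {0..<d} - {pv a, a, sc a, o'}" for m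
  proof -
    have "m < d" "m \<noteq> i" "m \<noteq> k" using m ao by auto
    then show ?thesis by (rule lh_PIK_nz[OF ik])
  qed
  then show ?thesis unfolding GG_def by (subst prod_zero_iff) auto
qed

lemma D_E:
  assumes c: "c \<in> S2 d" and dg: "diag_supported d c" and vc: "vanishes_on_center d v c" and ik: "nadj i k"
  shows "Esum c i k = 0"
proof -
  note f = nadj_facts[OF ik]
  have i: "i < d" and k: "k < d" using f by auto
  define P where "P = PIK i k"
  define Yv where "Yv j = (if j = i \<or> j = sc i then Yf i k j else 0)" for j
  define Zv where "Zv j = (if j = k \<or> j = sc k then Zf i k j else 0)" for j
  define \<mu>Y where "\<mu>Y = GG i k P * (alpha d v i * alpha d v (sc i))"
  define \<mu>Z where "\<mu>Z = GG k i P * (alpha d v k * alpha d v (sc k))"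
  have Y1: "Yf i k i = alpha d v i * lh (sc i) P * GG i k P"
    using YG1[OF i k, of P] f by (simp add: Yf_def P_def)
  have Y2: "Yf i k (sc i) = alpha d v (sc i) * lh (pv i) P * GG i k P"
  proof -
    have "pv i \<noteq> k" using f by auto
    from YG2[OF i k this, of P] show ?thesis by (simp add: Yf_def P_def)
  qed
  have Z1: "Zf i k k = alpha d v k * lh (sc k) P * GG k i P"
    using YG1[OF k i, of P] f by (simp add: Zf_def P_def)
  have Z2: "Zf i k (sc k) = alpha d v (sc k) * lh (pv k) P * GG k i P"
  proof -
    have "pv k \<noteq> i" using f by auto
    from YG2[OF k i this, of P] show ?thesis by (simp add: Zf_def P_def)
  qed
  have TY: "Tv Yv = vsc \<mu>Y P"
  proof -
    have "Tv Yv = vadd (vsc (Yv i) (V i)) (vsc (Yv (sc i)) (V (sc i)))"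
      by (rule Tv_supp2[OF i sc_lt]) (use f in \<open>auto simp: Yv_def\<close>)
    also have "\<dots> = vsc (GG i k P) (vadd (vsc (alpha d v i * lh (sc i) P) (V i)) (vsc (alpha d v (sc i) * lh (pv i) P) (V (sc i))))"
      using f by (simp add: Yv_def Y1 Y2 vsc_vadd vsc_vsc algebra_simps)
    also have "\<dots> = vsc (GG i k P) (vsc (alpha d v i * alpha d v (sc i)) P)"
      by (subst wach2_loc[OF i, of P "nvec d v k"]) (simp_all add: P_def PIK_def)
    finally show ?thesis by (simp add: vsc_vsc \<mu>Y_def)
  qed
  have TZ: "Tv Zv = vsc \<mu>Z P"
  proof -
    have "Tv Zv = vadd (vsc (Zv k) (V k)) (vsc (Zv (sc k)) (V (sc k)))"
      by (rule Tv_supp2[OF k sc_lt]) (use f in \<open>auto simp: Zv_def\<close>)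
    also have "\<dots> = vsc (GG k i P) (vadd (vsc (alpha d v k * lh (sc k) P) (V k)) (vsc (alpha d v (sc k) * lh (pv k) P) (V (sc k))))"
      using f by (simp add: Zv_def Z1 Z2 vsc_vadd vsc_vsc algebra_simps)
    also have "\<dots> = vsc (GG k i P) (vsc (alpha d v k * alpha d v (sc k)) P)"
      by (subst wach2_loc[OF k, of P "vsc (-1) (nvec d v i)"]) (simp_all add: P_def PIK_def cross_swap[of "nvec d v i"])
    finally show ?thesis by (simp add: vsc_vsc \<mu>Z_def)
  qed
  define u where "u j = \<mu>Z * Yv j + (- \<mu>Y) * Zv j" for j
  have Tu: "Tv u = (0, 0, 0)"
    unfolding u_def Tv_lin TY TZ by (cases P) (simp add: vsc_def vadd_def algebra_simps)
  have "u \<in> center d v"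
    unfolding center_def
  proof (intro CollectI allI impI)
    fix m :: nat assume "m < 3"
    then have "(\<Sum>i<d. tau d v m i * u i) = comp3 (Tv u) m" by (simp add: comp3_Tv)
    also have "\<dots> = 0" by (simp add: Tu)
    finally show "(\<Sum>i<d. tau d v m i * u i) = 0" .
  qed
  then have q0: "qeval d c u = 0" using vc by (simp add: vanishes_on_center_def)
  have "qeval d c u = (\<Sum>a\<in>{i, sc i}. \<Sum>b\<in>{k, sc k}. (c a b + c b a) * (\<mu>Z * Yv a) * (- \<mu>Y * Zv b))"
    unfolding u_def
  proof (rule qeval_YZ[OF dg ik])
    show "\<mu>Z * Yv j = 0" if "j < d" "j \<noteq> i" "j \<noteq> sc i" for j using that by (simp add: Yv_def)
    show "- \<mu>Y * Zv j = 0" if "j < d" "j \<noteq> k" "j \<noteq> sc k" for j using that by (simp add: Zv_def)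
  qed
  also have "\<dots> = \<mu>Z * (- \<mu>Y) * Esum c i k"
    unfolding Esum_def sum_distrib_left
    by (intro sum.cong refl) (auto simp: Yv_def Zv_def P_def algebra_simps)
  finally have "\<mu>Z * (- \<mu>Y) * Esum c i k = 0" using q0 by simp
  moreover have "\<mu>Y \<noteq> 0" unfolding \<mu>Y_def P_def using GG_nz[OF ik] alpha_nz by simp
  moreover have "\<mu>Z \<noteq> 0" unfolding \<mu>Z_def P_def using GG_nz[OF ik] alpha_nz by simp
  ultimately show ?thesis by simp
qed

end


context wp begin

lemma Yf_nz: "nadj i k \<Longrightarrow> a = i \<or> a = sc i \<Longrightarrow> Yf i k a \<noteq> 0"
proof -
  assume ik: "nadj i k" and a: "a = i \<or> a = sc i"
  note f = nadj_facts[OF ik]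
  have "lh m (PIK i k) \<noteq> 0" if m: "m \<in> MM a - {k}" for m
  proof (rule lh_PIK_nz[OF ik])
    show "m < d" "m \<noteq> k" using m by (auto simp: MM_mem)
    show "m \<noteq> i" using m a pv_sc[of i] f by (auto simp: MM_mem)
  qed
  then show ?thesis unfolding Yf_def using alpha_nz MM_fin by (simp add: prod_zero_iff)
qed

lemma Zf_nz: "nadj i k \<Longrightarrow> b = k \<or> b = sc k \<Longrightarrow> Zf i k b \<noteq> 0"
proof -
  assume ik: "nadj i k" and b: "b = k \<or> b = sc k"
  note f = nadj_facts[OF ik]
  have "lh m (PIK i k) \<noteq> 0" if m: "m \<in> MM b - {i}" for m
  proof (rule lh_PIK_nz[OF ik])
    show "m < d" "m \<noteq> i" using m by (auto simp: MM_mem)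
    show "m \<noteq> k" using m b pv_sc[of k] f by (auto simp: MM_mem)
  qed
  then show ?thesis unfolding Zf_def using alpha_nz MM_fin by (simp add: prod_zero_iff)
qed

lemma Esum_expand: "nadj i k \<Longrightarrow> Esum c i k =
   (c i k + c k i) * Yf i k i * Zf i k k + (c i (sc k) + c (sc k) i) * Yf i k i * Zf i k (sc k)
 + (c (sc i) k + c k (sc i)) * Yf i k (sc i) * Zf i k k + (c (sc i) (sc k) + c (sc k) (sc i)) * Yf i k (sc i) * Zf i k (sc k)"
proof -
  assume ik: "nadj i k"
  note f = nadj_facts[OF ik]
  have "i \<noteq> sc i" "k \<noteq> sc k" using f by auto
  then show ?thesis unfolding Esum_def by (simp add: algebra_simps)
qed

lemma mod_add_inj: "i < d \<Longrightarrow> x < d \<Longrightarrow> y < d \<Longrightarrow> (i + x) mod d = (i + y) mod d \<Longrightarrow> x = y"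
proof -
  assume a: "i < d" "x < d" "y < d" and e: "(i + x) mod d = (i + y) mod d"
  have h: "(i + z) mod d = (if i + z < d then i + z else i + z - d)" if "z < d" for z
  proof (cases "i + z < d")
    case False
    then have "i + z - d < d" using a(1) that by arith
    then show ?thesis using False by (simp add: mod_if)
  qed simp
  show "x = y" using e h[OF a(2)] h[OF a(3)] a by (auto split: if_splits)
qed

lemma propagate:
  assumes r: "r \<in> S2 d" and dg: "diag_supported d r"
    and E: "\<And>i k. nadj i k \<Longrightarrow> Esum r i k = 0"
    and row0: "\<And>j. j < d \<Longrightarrow> r 0 j + r j 0 = 0"
  shows "r a b = 0"
proof -
  define sy where "sy a b = r a b + r b a" for a b
  have sy_sym: "sy a b = sy b a" for a b by (simp add: sy_def add.commute)
  have rows: "\<forall>b<d. sy i b = 0" if "i < d" for i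
    using that
  proof (induction i)
    case 0 then show ?case using row0 by (simp add: sy_def)
  next
    case (Suc i)
    have i: "i < d" using Suc.prems by simp
    have IH: "\<And>b. b < d \<Longrightarrow> sy i b = 0" using Suc.IH i by blast
    have t: "sc i = Suc i" using Suc.prems by simp
    define t' where "t' = sc i"
    have tlt: "t' < d" unfolding t'_def by (rule sc_lt)
    have sc_add: "sc ((i + x) mod d) = (i + Suc x) mod d" for x by (simp add: mod_Suc_eq)
    have Pm: "m + 2 \<le> d - 1 \<Longrightarrow> sy t' ((i + (m + 2)) mod d) = 0" for m
    proof (induction m)
      case 0
      have "(i + (0 + 2)) mod d = sc t'" by (simp add: t'_def mod_Suc_eq)
      then show ?case using diag_facts[OF dg tlt] by (simp add: sy_def)
    next
      case (Suc m)
      define x where "x = m + 2"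
      have xb: "2 \<le> x" "x < d" "Suc x < d" "x \<le> d - 1" using Suc.prems by (auto simp: x_def)
      have z2: "sy t' ((i + x) mod d) = 0" using Suc.IH xb by (simp add: x_def)
      define b where "b = (i + x) mod d"
      have blt: "b < d" using dpos by (simp add: b_def)
      have ibne: "b \<noteq> i"
      proof
        assume "b = i" then have "(i + x) mod d = (i + 0) mod d" using i by (simp add: b_def)
        then have "x = 0" using mod_add_inj[OF i xb(2), of 0] dpos by simp
        then show False using xb by simp
      qed
      have ib2: "b \<noteq> sc i"
      proof
        assume "b = sc i" then have "(i + x) mod d = (i + 1) mod d" using i by (simp add: b_def)
        then have "x = 1" using mod_add_inj[OF i xb(2), of 1] d4 by simp
        then show False using xb by simp
      qed
      have ib3: "b \<noteq> pv i"
      proof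
        assume "b = pv i"
        then have "sc b = i" using sc_pv[OF i] by simp
        then have "(i + Suc x) mod d = (i + 0) mod d" using i sc_add[of x] by (simp add: b_def)
        then have "Suc x = 0" using mod_add_inj[OF i xb(3), of 0] dpos by simp
        then show False by simp
      qed
      have nik: "nadj i b" unfolding nadj_def using i blt ibne ib2 ib3 by simp
      have e: "Esum r i b = 0" by (rule E[OF nik])
      have z1: "sy i b = 0" "sy i (sc b) = 0" using IH blt sc_lt by auto
      have z2': "sy t' b = 0" using z2 by (simp add: b_def)
      have ex: "Esum r i b = sy i b * Yf i b i * Zf i b b + sy i (sc b) * Yf i b i * Zf i b (sc b)
          + sy t' b * Yf i b t' * Zf i b b + sy t' (sc b) * Yf i b t' * Zf i b (sc b)"
        unfolding Esum_expand[OF nik, of r] sy_def t'_def by simp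
      have "sy t' (sc b) * Yf i b t' * Zf i b (sc b) = 0"
        using e z1 z2' ex by simp
      moreover have "Yf i b t' \<noteq> 0" using Yf_nz[OF nik] by (simp add: t'_def)
      moreover have "Zf i b (sc b) \<noteq> 0" using Zf_nz[OF nik] by simp
      ultimately have "sy t' (sc b) = 0" by simp
      moreover have "(i + (Suc m + 2)) mod d = sc b"
        unfolding b_def sc_add x_def by simp
      ultimately show ?case by simp
    qed
    have P: "sy t' ((i + x) mod d) = 0" if "2 \<le> x" "x \<le> d - 1" for x
    proof -
      have e: "x - 2 + 2 = x" using that by simp
      show ?thesis using Pm[of "x - 2"] that unfolding e by blast
    qed
    show ?case
    proof (intro allI impI)
      fix b assume b: "b < d"
      define x where "x = (b + d - i) mod d"
      have xlt: "x < d" using i by (simp add: x_def)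
      have bx: "b = (i + x) mod d"
      proof -
        have "(i + x) mod d = (i + (b + d - i)) mod d" by (simp add: x_def mod_add_right_eq)
        also have "i + (b + d - i) = b + d" using i by simp
        finally show ?thesis using b by simp
      qed
      consider "x = 0" | "x = 1" | "2 \<le> x" by arith
      then have "sy t' b = 0"
      proof cases
        case 1 then have "b = i" using bx i by simp
        then show ?thesis using IH[OF i] sy_sym[of t' i] tlt by (simp add: IH tlt)
      next
        case 2 then have "b = t'" using bx by (simp add: t'_def)
        then show ?thesis using diag_facts[OF dg tlt] by (simp add: sy_def)
      next
        case 3 then show ?thesis using P[OF 3] xlt bx by simp
      qed
      then show "sy (Suc i) b = 0" using t by (simp add: t'_def)
    qed
  qed
  show ?thesis
  proof (cases "a \<le> b \<and> b < d")
    case False then show ?thesis using r unfolding S2_def by blast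
  next
    case True
    then have ab: "a < d" "b < d" by auto
    show ?thesis
    proof (cases "a = b")
      case True then show ?thesis using diag_facts[OF dg ab(1)] by simp
    next
      case False
      then have "b > a" using \<open>a \<le> b \<and> b < d\<close> by simp
      then have "r b a = 0" using S2_lower[OF r] by blast
      moreover have "sy a b = 0" using rows[OF ab(1)] ab by blast
      ultimately show ?thesis by (simp add: sy_def)
    qed
  qed
qed

end


primrec lr :: "(nat \<Rightarrow> 'a::field) \<Rightarrow> (nat \<Rightarrow> 'a) \<Rightarrow> nat \<Rightarrow> nat \<Rightarrow> 'a" where
  "lr F C dd 0 = 0"
| "lr F C dd (Suc j) = (if Suc j \<le> 1 \<or> dd - 1 \<le> Suc j then 0 else (lr F C dd j * F (Suc j) - C (Suc j)) / F j)"

context wp begin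

lemma Esum_diff: "Esum (\<lambda>a b. c a b - e a b) i k = Esum c i k - Esum e i k"
  by (simp add: Esum_def sum_subtractf[symmetric] algebra_simps)

lemma Esum_sum: "Esum (\<lambda>a b. \<Sum>q\<in>K. f q a b) i k = (\<Sum>q\<in>K. Esum (f q) i k)"
proof -
  have "Esum (\<lambda>a b. \<Sum>q\<in>K. f q a b) i k =
     (\<Sum>a\<in>{i, sc i}. \<Sum>b\<in>{k, sc k}. \<Sum>q\<in>K. (f q a b + f q b a) * Yf i k a * Zf i k b)"
    by (simp add: Esum_def sum.distrib[symmetric] sum_distrib_right)
  also have "\<dots> = (\<Sum>a\<in>{i, sc i}. \<Sum>q\<in>K. \<Sum>b\<in>{k, sc k}. (f q a b + f q b a) * Yf i k a * Zf i k b)"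
    by (rule sum.cong[OF refl]) (rule sum.swap)
  also have "\<dots> = (\<Sum>q\<in>K. \<Sum>a\<in>{i, sc i}. \<Sum>b\<in>{k, sc k}. (f q a b + f q b a) * Yf i k a * Zf i k b)"
    by (rule sum.swap)
  finally show ?thesis by (simp add: Esum_def)
qed

lemma Esum_scale: "Esum (\<lambda>a b. t * c a b) i k = t * Esum c i k"
  by (simp add: Esum_def sum_distrib_left algebra_simps)

abbreviation QS where "QS lam \<equiv> (\<lambda>a b. \<Sum>q<d. lam q * Qk d v q a b)"

lemma QS_E: "nadj i k \<Longrightarrow> Esum (QS lam) i k = 0"
proof -
  assume ik: "nadj i k"
  have "Esum (QS lam) i k = (\<Sum>q<d. Esum (\<lambda>a b. lam q * Qk d v q a b) i k)" by (rule Esum_sum)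
  also have "\<dots> = (\<Sum>q<d. lam q * Esum (Qk d v q) i k)" by (simp add: Esum_scale)
  also have "\<dots> = 0" using IW2_E[OF Qk_IW2 ik] by simp
  finally show ?thesis .
qed

lemma QS_diag: "diag_supported d (QS lam)"
  using Qk_diag unfolding diag_supported_def by simp

lemma QS_S2: "QS lam \<in> S2 d"
proof -
  have "QS lam a b = 0" if "\<not> (a \<le> b \<and> b < d)" for a b
  proof -
    have "Qk d v q a b = 0" for q using that by (auto simp: Qk_entry)
    then show ?thesis by simp
  qed
  then show ?thesis unfolding S2_def by blast
qed

lemma qeval_QS: "qeval d (QS lam) x = (\<Sum>q<d. lam q * qeval d (Qk d v q) x)"
proof -
  have "qeval d (QS lam) x = (\<Sum>q<d. qeval d (\<lambda>a b. lam q * Qk d v q a b) x)" by (rule qeval_sum_c)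
  also have "\<dots> = (\<Sum>q<d. lam q * qeval d (Qk d v q) x)"
    using qeval_lin_c[of d "lam _" "Qk d v _" 0 "Qk d v _"] by simp
  finally show ?thesis .
qed

lemma QS_IW2: "QS lam \<in> IW2 d v"
  unfolding IW2_def using QS_S2 qeval_QS Qk_image by simp

lemma QS_D: "QS lam \<in> {c \<in> S2 d. diag_supported d c \<and> vanishes_on_center d v c}"
  using QS_S2 QS_diag qeval_QS Qk_center by (simp add: vanishes_on_center_def)

lemma LV_row0: "k < d \<Longrightarrow> 0 < j \<Longrightarrow> k \<noteq> 0 \<Longrightarrow> k \<noteq> d - 1 \<Longrightarrow> LV k 0 j = 0"
proof -
  assume k: "k < d" "k \<noteq> 0" "k \<noteq> d - 1"
  have "sc k \<noteq> 0" using sc_val[OF k(1) k(3)] by simp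
  then show ?thesis using k by (simp add: LV_def)
qed

lemma QS_row0:
  assumes j: "2 \<le> j" "j \<le> d - 2" and l0: "lam 0 = 0" and l1: "lam (d - 1) = 0"
  shows "QS lam 0 j + QS lam j 0 = lam (j - 1) * L j 0 / alpha d v j - lam j * L (j - 1) 0 / alpha d v j"
proof -
  have jd: "j < d" "0 < j" using j d4 by auto
  have "QS lam j 0 = 0" using jd by (simp add: Qk_entry)
  moreover have "QS lam 0 j = (\<Sum>q<d. lam q * LV q 0 j) + (\<Sum>q<d. lam q * LV q j 0)"
    using jd by (simp add: Qk_entry sum.distrib algebra_simps)
  moreover have "(\<Sum>q<d. lam q * LV q 0 j) = 0"
  proof (rule sum.neutral, rule ballI)
    fix q assume "q \<in> {..<d}"
    then show "lam q * LV q 0 j = 0" using l0 l1 LV_row0[of q j] jd by (cases "q = 0 \<or> q = d - 1") auto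
  qed
  moreover have "(\<Sum>q<d. lam q * LV q j 0) = lam (j - 1) * L j 0 / alpha d v j - lam j * L (j - 1) 0 / alpha d v j"
  proof -
    have pj: "pv j = j - 1" using pv_val[OF jd(2) jd(1)] .
    have e1: "(j = sc q) \<longleftrightarrow> (q = pv j)" if "q < d" for q
      using that jd pv_sc sc_pv by metis
    have "(\<Sum>q<d. lam q * LV q j 0) = (\<Sum>q<d. (if q = pv j then lam q * (L (Suc q) 0 / alpha d v (Suc q)) else 0))
        - (\<Sum>q<d. (if q = j then lam q * (L (pv q) 0 / alpha d v q) else 0))"
    proof -
      have pt: "lam q * LV q j 0 = (if q = pv j then lam q * (L (Suc q) 0 / alpha d v (Suc q)) else 0)
        - (if q = j then lam q * (L (pv q) 0 / alpha d v q) else 0)" if q: "q < d" for q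
        using e1[OF q] q by (simp add: LV_def algebra_simps)
      have "(\<Sum>q<d. lam q * LV q j 0) = (\<Sum>q<d. (if q = pv j then lam q * (L (Suc q) 0 / alpha d v (Suc q)) else 0)
        - (if q = j then lam q * (L (pv q) 0 / alpha d v q) else 0))"
        by (rule sum.cong[OF refl]) (simp add: pt)
      then show ?thesis by (simp only: sum_subtractf)
    qed
    also have "\<dots> = lam (pv j) * (L (Suc (pv j)) 0 / alpha d v (Suc (pv j))) - lam j * (L (pv j) 0 / alpha d v j)"
    proof -
      have "(\<Sum>q<d. (if q = pv j then lam q * (L (Suc q) 0 / alpha d v (Suc q)) else 0)) = lam (pv j) * (L (Suc (pv j)) 0 / alpha d v (Suc (pv j)))"
        using pv_lt[of j] by (simp add: sum.delta)
      moreover have "(\<Sum>q<d. (if q = j then lam q * (L (pv q) 0 / alpha d v q) else 0)) = lam j * (L (pv j) 0 / alpha d v j)"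
        using jd by (simp add: sum.delta)
      ultimately show ?thesis by simp
    qed
    also have "Suc (pv j) = j" using pj jd by simp
    finally show ?thesis using pj by simp
  qed
  ultimately show ?thesis by simp
qed

end


context wp begin

lemma span_lemma:
  assumes c: "c \<in> S2 d" and dg: "diag_supported d c" and E: "\<And>i k. nadj i k \<Longrightarrow> Esum c i k = 0"
  shows "\<exists>lam. c = QS lam"
proof -
  define lam where "lam = lr (\<lambda>j. L j 0) (\<lambda>j. alpha d v j * c 0 j) d"
  have l0: "lam 0 = 0" by (simp add: lam_def)
  have l1: "lam (d - 1) = 0"
  proof -
    have "d - 1 = Suc (d - 2)" using d4 by simp
    then show ?thesis by (simp add: lam_def)
  qed
  have row: "lam (j - 1) * L j 0 / alpha d v j - lam j * L (j - 1) 0 / alpha d v j = c 0 j"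
    if j: "2 \<le> j" "j \<le> d - 2" for j
  proof -
    have js: "j = Suc (j - 1)" using j by simp
    have lj: "lam j = (lam (j - 1) * L j 0 - alpha d v j * c 0 j) / L (j - 1) 0"
    proof -
      obtain j' where j': "j = Suc j'" using js by blast
      have "\<not> (Suc j' \<le> 1 \<or> d - 1 \<le> Suc j')" using j j' by arith
      then show ?thesis unfolding j' by (simp add: lam_def)
    qed
    have jm: "j - 1 < d" "j - 1 \<noteq> d - 1" using j d4 by auto
    have "sc (j - 1) = j" using sc_val[OF jm] j by simp
    then have Lnz: "L (j - 1) 0 \<noteq> 0" using L_nz[OF jm(1), of 0] j d4 by auto
    show ?thesis using Lnz alpha_nz[of j] by (simp add: lj field_simps)
  qed
  define r where "r a b = c a b - QS lam a b" for a b
  have rS2: "r \<in> S2 d"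
  proof -
    have "r a b = 0" if "\<not> (a \<le> b \<and> b < d)" for a b
    proof -
      have "c a b = 0" using c that unfolding S2_def by blast
      moreover have "QS lam a b = 0" using QS_S2 that unfolding S2_def by blast
      ultimately show ?thesis by (simp add: r_def)
    qed
    then show ?thesis unfolding S2_def by blast
  qed
  have rdg: "diag_supported d r"
    using dg QS_diag[of lam] unfolding diag_supported_def r_def by simp
  have rE: "Esum r i k = 0" if "nadj i k" for i k
  proof -
    have "Esum r i k = Esum c i k - Esum (QS lam) i k" unfolding r_def by (rule Esum_diff)
    then show ?thesis using E[OF that] QS_E[OF that] by simp
  qed
  have rrow: "r 0 j + r j 0 = 0" if j: "j < d" for j
  proof -
    consider "j = 0" | "j = 1" | "j = d - 1" | "2 \<le> j \<and> j \<le> d - 2" using j by arith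
    then show ?thesis
    proof cases
      case 1 then show ?thesis using diag_facts[OF rdg dpos] by simp
    next
      case 2
      have "sc 0 = 1" using d4 by simp
      then show ?thesis using 2 diag_facts[OF rdg dpos] by simp
    next
      case 3
      have "d - 1 < d" using dpos by simp
      moreover have "sc (d - 1) = 0" by (rule sc_last)
      ultimately show ?thesis using 3 diag_facts[OF rdg, of "d - 1"] by simp
    next
      case 4
      have "c j 0 = 0" using S2_lower[OF c] 4 by simp
      moreover have "QS lam 0 j + QS lam j 0 = c 0 j"
        using QS_row0[of j lam] 4 l0 l1 row[of j] by simp
      ultimately show ?thesis by (simp add: r_def)
    qed
  qed
  have "r a b = 0" for a b by (rule propagate[OF rS2 rdg rE rrow])
  then have "c = QS lam" by (intro ext) (simp add: r_def)
  then show ?thesis by blast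
qed

lemma main:
  "IW2 d v = {c \<in> S2 d. diag_supported d c \<and> vanishes_on_center d v c}
     \<and> IW2 d v = {(\<lambda>i j. \<Sum>k<d. lam k * Qk d v k i j) | lam. True}"
proof -
  let ?D = "{c \<in> S2 d. diag_supported d c \<and> vanishes_on_center d v c}"
  let ?S = "{(\<lambda>i j. \<Sum>k<d. lam k * Qk d v k i j) | lam. True}"
  have 1: "IW2 d v \<subseteq> ?S"
  proof
    fix c assume c: "c \<in> IW2 d v"
    have "c \<in> S2 d" using c by (simp add: IW2_def)
    then obtain lam where "c = QS lam" using span_lemma IW2_diag[OF c] IW2_E[OF c] by blast
    then show "c \<in> ?S" by blast
  qed
  have 2: "?S \<subseteq> IW2 d v" using QS_IW2 by blast
  have 3: "?D \<subseteq> ?S"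
  proof
    fix c assume c: "c \<in> ?D"
    then have cs: "c \<in> S2 d" "diag_supported d c" "vanishes_on_center d v c" by auto
    obtain lam where "c = QS lam" using span_lemma[OF cs(1,2)] D_E[OF cs] by blast
    then show "c \<in> ?S" by blast
  qed
  have 4: "?S \<subseteq> ?D" using QS_D by blast
  show ?thesis using 1 2 3 4 by blast
qed

end

theorem theorem3p7:
  fixes d :: nat and v :: "nat \<Rightarrow> 'a::linordered_field \<times> 'a"
  assumes "d \<ge> 4"
    and "convex_polygon d v"
    and "no_three_concurrent d v"
  shows "IW2 d v = {c \<in> S2 d. diag_supported d c \<and> vanishes_on_center d v c}
     \<and> IW2 d v = {(\<lambda>i j. \<Sum>k<d. lam k * Qk d v k i j) | lam. True}"
proof -
  interpret wp d v using assms by unfold_locales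
  show ?thesis by (rule main)
qed


end
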